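(* Let $R$ be a commutative domain, $B=R(t,\sigma,H,J)$, assume $\sigma^n=\mathrm{id}_R$ and let $\mathcal O$ be a $\sigma$-orbit in $\operatorname{Maxspec}(R)$ of size $n$ containing no breaks. Let $M$ be a simple $B$-module which is an $R$-weight module with $\operatorname{Supp}_R(M)\subseteq\mathcal O$. Then for each $\mathfrak m\in\mathcal O$, $M_{\mathfrak m}$ is a simple $\Lambda_n/(\mathfrak m)$-module, and for all $i\in\mathbb Z$, $M_{\sigma^i(\mathfrak m)}\cong{}^{\sigma^i}M_{\mathfrak m}$ as $\Lambda_n/(\sigma^i(\mathfrak m))$-modules.
   Context: $\Bbbk$ is a field; all algebras are associative unital $\Bbbk$-algebras. For an algebra $R$ and $\sigma\in\operatorname{Aut}_\Bbbk(R)$, $R[t,t^{-1};\sigma]$ is the skew Laurent ring: generated over $R$ by $t,t^{-1}$ with $tt^{-1}=t^{-1}t=1$ and $t^{\pm1}r=\sigma^{\pm1}(r)t^{\pm1}$ for $r\in R$. Given two-sided ideals $H,J$ of $R$, set $I^{(0)}=R$, $I^{(n)}=J\sigma(J)\cdots\sigma^{n-1}(J)$ for $n\ge1$, and $I^{(n)}=\sigma^{-1}(H)\sigma^{-2}(H)\cdots\sigma^{n}(H)$ for $n\le-1$; it is assumed throughout that $I^{(n)}\neq0$ for all $n\in\mathbb Z$. The Bell–Rogalski (BR) algebra is $R(t,\sigma,H,J)=\bigoplus_{n\in\mathbb Z}I^{(n)}t^n\subseteq R[t,t^{-1};\sigma]$; $B_k=I^{(k)}t^k$. For $R$ commutative,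 $\mathcal S(B)=\{\mathfrak p\in\operatorname{Spec}(R):\mathfrak p\supseteq HJ\}$; a maximal ideal $\mathfrak m$ is a break if $\sigma(\mathfrak m)\in\mathcal S(B)$. A left $B$-module $M$ is an $R$-weight module if $M=\bigoplus_{\mathfrak m\in\operatorname{Maxspec}(R)}M_{\mathfrak m}$, $M_{\mathfrak m}=\{v:\mathfrak mv=0\}$, each $\dim_{R/\mathfrak m}M_{\mathfrak m}<\infty$. $\sigma$-orbits are orbits of $k\cdot\mathfrak m=\sigma^k(\mathfrak m)$. With $\sigma^n=\mathrm{id}$: $\Lambda_n=\bigoplus_{k\in\mathbb Z}B_{kn}$ (the $n$-th Veronese subalgebra); for $\mathfrak m\in\mathcal O$, $(\mathfrak m)=\mathfrak m\Lambda_n=\Lambda_n\mathfrak m$ is a two-sided ideal of $\Lambda_n$; $\sigma$ acts on $\Lambda_n$ by $\sigma(at^{kn})=\sigma(a)t^{kn}$, inducing $\Lambda_n/(\mathfrak m)\cong\Lambda_n/(\sigma^i(\mathfrak m))$. For a $\Lambda_n/(\mathfrak m)$-module $N$, ${}^{\sigma^i}N$ is the $\Lambda_n/(\sigma^i(\mathfrak m))$-module equal to $N$ as a set (elements written ${}^{\sigma^i}v$) with action $\lambda\cdot{}^{\sigma^i}v={}^{\sigma^i}(\sigma^{-i}(\lambda)v)$. *)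

theory Defs
  imports Main
begin

definition is_ideal :: "'r::comm_ring_1 set \<Rightarrow> bool" where
  "is_ideal I \<longleftrightarrow> 0 \<in> I \<and> (\<forall>x\<in>I. \<forall>y\<in>I. x + y \<in> I) \<and> (\<forall>r. \<forall>x\<in>I. r * x \<in> I)"

definition iprod :: "'r::comm_ring_1 set \<Rightarrow> 'r set \<Rightarrow> 'r set" where
  "iprod A B = \<Inter>{I. is_ideal I \<and> {a * b | a b. a \<in> A \<and> b \<in> B} \<subseteq> I}"

definition is_maximal :: "'r::comm_ring_1 set \<Rightarrow> bool" where
  "is_maximal m \<longleftrightarrow> is_ideal m \<and> m \<noteq> UNIV \<and>
     (\<forall>I. is_ideal I \<and> m \<subseteq> I \<longrightarrow> I = m \<or> I = UNIV)"

definition Maxspec :: "'r::comm_ring_1 set set" where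
  "Maxspec = {m. is_maximal m}"

definition is_prime_ideal :: "'r::comm_ring_1 set \<Rightarrow> bool" where
  "is_prime_ideal p \<longleftrightarrow> is_ideal p \<and> p \<noteq> UNIV \<and> (\<forall>a b. a * b \<in> p \<longrightarrow> a \<in> p \<or> b \<in> p)"

definition ring_aut :: "('r::comm_ring_1 \<Rightarrow> 'r) \<Rightarrow> bool" where
  "ring_aut \<sigma> \<longleftrightarrow> bij \<sigma> \<and> (\<forall>a b. \<sigma> (a + b) = \<sigma> a + \<sigma> b) \<and>
     (\<forall>a b. \<sigma> (a * b) = \<sigma> a * \<sigma> b) \<and> \<sigma> 1 = 1"

definition spow :: "('r \<Rightarrow> 'r) \<Rightarrow> int \<Rightarrow> 'r \<Rightarrow> 'r" where
  "spow \<sigma> k = (if k \<ge> 0 then \<sigma> ^^ nat k else inv \<sigma> ^^ nat (- k))"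

primrec Jpow :: "('r::comm_ring_1 \<Rightarrow> 'r) \<Rightarrow> 'r set \<Rightarrow> nat \<Rightarrow> 'r set" where
  "Jpow \<sigma> J 0 = UNIV"
| "Jpow \<sigma> J (Suc m) = iprod (Jpow \<sigma> J m) (spow \<sigma> (int m) ` J)"

primrec Hpow :: "('r::comm_ring_1 \<Rightarrow> 'r) \<Rightarrow> 'r set \<Rightarrow> nat \<Rightarrow> 'r set" where
  "Hpow \<sigma> H 0 = UNIV"
| "Hpow \<sigma> H (Suc m) = iprod (Hpow \<sigma> H m) (spow \<sigma> (- int (Suc m)) ` H)"

text \<open>I^(0)=R, I^(n)=J s(J)...s^(n-1)(J) (n>=1), I^(n)=s^-1(H)...s^n(H) (n<=-1).\<close>
definition Iseq :: "('r::comm_ring_1 \<Rightarrow> 'r) \<Rightarrow> 'r set \<Rightarrow> 'r set \<Rightarrow> int \<Rightarrow> 'r set" where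
  "Iseq \<sigma> H J k = (if k \<ge> 0 then Jpow \<sigma> J (nat k) else Hpow \<sigma> H (nat (- k)))"

text \<open>An element sum_k f(k) t^k is represented by its coefficient function f :: int => 'r
  (finitely supported).\<close>

definition lconst :: "'r::comm_ring_1 \<Rightarrow> int \<Rightarrow> 'r" where
  "lconst a = (\<lambda>k. if k = 0 then a else 0)"

definition ladd :: "(int \<Rightarrow> 'r::comm_ring_1) \<Rightarrow> (int \<Rightarrow> 'r) \<Rightarrow> int \<Rightarrow> 'r" where
  "ladd f g = (\<lambda>k. f k + g k)"

text \<open>(f t^k)(g t^l) = f sigma^k(g) t^(k+l).\<close>
definition lmult :: "('r::comm_ring_1 \<Rightarrow> 'r) \<Rightarrow> (int \<Rightarrow> 'r) \<Rightarrow> (int \<Rightarrow> 'r) \<Rightarrow> int \<Rightarrow> 'r" where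
  "lmult \<sigma> f g = (\<lambda>n. \<Sum>k\<in>{k. f k \<noteq> 0}. f k * spow \<sigma> k (g (n - k)))"

definition BR :: "('r::comm_ring_1 \<Rightarrow> 'r) \<Rightarrow> 'r set \<Rightarrow> 'r set \<Rightarrow> (int \<Rightarrow> 'r) set" where
  "BR \<sigma> H J = {f. finite {k. f k \<noteq> 0} \<and> (\<forall>k. f k \<in> Iseq \<sigma> H J k)}"

definition SB :: "'r::comm_ring_1 set \<Rightarrow> 'r set \<Rightarrow> 'r set set" where
  "SB H J = {p. is_prime_ideal p \<and> iprod H J \<subseteq> p}"

definition is_break :: "('r::comm_ring_1 \<Rightarrow> 'r) \<Rightarrow> 'r set \<Rightarrow> 'r set \<Rightarrow> 'r set \<Rightarrow> bool" where
  "is_break \<sigma> H J m \<longleftrightarrow> m \<in> Maxspec \<and> \<sigma> ` m \<in> SB H J"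

definition is_sigma_orbit :: "('r::comm_ring_1 \<Rightarrow> 'r) \<Rightarrow> 'r set set \<Rightarrow> bool" where
  "is_sigma_orbit \<sigma> Orb \<longleftrightarrow> (\<exists>m \<in> Maxspec. Orb = {spow \<sigma> k ` m | k. True})"

text \<open>A left B-module: abelian group 'm with an action act (only its values on B matter).\<close>
definition is_B_module :: "('r::comm_ring_1 \<Rightarrow> 'r) \<Rightarrow> 'r set \<Rightarrow> 'r set \<Rightarrow>
    ((int \<Rightarrow> 'r) \<Rightarrow> 'm::ab_group_add \<Rightarrow> 'm) \<Rightarrow> bool" where
  "is_B_module \<sigma> H J act \<longleftrightarrow>
     (\<forall>f\<in>BR \<sigma> H J. \<forall>v w. act f (v + w) = act f v + act f w) \<and>
     (\<forall>f\<in>BR \<sigma> H J. \<forall>g\<in>BR \<sigma> H J. \<forall>v. act (ladd f g) v = act f v + act g v) \<and>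
     (\<forall>f\<in>BR \<sigma> H J. \<forall>g\<in>BR \<sigma> H J. \<forall>v. act (lmult \<sigma> f g) v = act f (act g v)) \<and>
     (\<forall>v. act (lconst 1) v = v)"

definition is_B_submodule :: "('r::comm_ring_1 \<Rightarrow> 'r) \<Rightarrow> 'r set \<Rightarrow> 'r set \<Rightarrow>
    ((int \<Rightarrow> 'r) \<Rightarrow> 'm::ab_group_add \<Rightarrow> 'm) \<Rightarrow> 'm set \<Rightarrow> bool" where
  "is_B_submodule \<sigma> H J act N \<longleftrightarrow> 0 \<in> N \<and> (\<forall>v\<in>N. \<forall>w\<in>N. v + w \<in> N) \<and> (\<forall>v\<in>N. - v \<in> N) \<and>
     (\<forall>f\<in>BR \<sigma> H J. \<forall>v\<in>N. act f v \<in> N)"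

definition simple_B_module :: "('r::comm_ring_1 \<Rightarrow> 'r) \<Rightarrow> 'r set \<Rightarrow> 'r set \<Rightarrow>
    ((int \<Rightarrow> 'r) \<Rightarrow> 'm::ab_group_add \<Rightarrow> 'm) \<Rightarrow> bool" where
  "simple_B_module \<sigma> H J act \<longleftrightarrow> is_B_module \<sigma> H J act \<and> (UNIV :: 'm set) \<noteq> {0} \<and>
     (\<forall>N. is_B_submodule \<sigma> H J act N \<longrightarrow> N = {0} \<or> N = UNIV)"

text \<open>Weight space M_m = {v. m v = 0} (R acts through degree 0).\<close>
definition wsp :: "((int \<Rightarrow> 'r::comm_ring_1) \<Rightarrow> 'm::ab_group_add \<Rightarrow> 'm) \<Rightarrow> 'r set \<Rightarrow> 'm set" where
  "wsp act m = {v. \<forall>a\<in>m. act (lconst a) v = 0}"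

text \<open>R-weight module: M is the internal direct sum of the M_m (m maximal), and each
  M_m is finite dimensional over R/m (equivalently finitely generated over R).\<close>
definition is_weight_module :: "((int \<Rightarrow> 'r::comm_ring_1) \<Rightarrow> 'm::ab_group_add \<Rightarrow> 'm) \<Rightarrow> bool" where
  "is_weight_module act \<longleftrightarrow>
     (\<forall>v. \<exists>S u. finite S \<and> S \<subseteq> Maxspec \<and> (\<forall>m\<in>S. u m \<in> wsp act m) \<and> v = (\<Sum>m\<in>S. u m)) \<and>
     (\<forall>S u. finite S \<and> S \<subseteq> Maxspec \<and> (\<forall>m\<in>S. u m \<in> wsp act m) \<and> (\<Sum>m\<in>S. u m) = 0
            \<longrightarrow> (\<forall>m\<in>S. u m = 0)) \<and>
     (\<forall>m\<in>Maxspec. \<exists>F. finite F \<and> F \<subseteq> wsp act m \<and>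
            (\<forall>v\<in>wsp act m. \<exists>c. v = (\<Sum>x\<in>F. act (lconst (c x)) x)))"

definition supp :: "((int \<Rightarrow> 'r::comm_ring_1) \<Rightarrow> 'm::ab_group_add \<Rightarrow> 'm) \<Rightarrow> 'r set set" where
  "supp act = {m \<in> Maxspec. wsp act m \<noteq> {0}}"

definition Lam :: "('r::comm_ring_1 \<Rightarrow> 'r) \<Rightarrow> 'r set \<Rightarrow> 'r set \<Rightarrow> nat \<Rightarrow> (int \<Rightarrow> 'r) set" where
  "Lam \<sigma> H J n = {f \<in> BR \<sigma> H J. \<forall>k. f k \<noteq> 0 \<longrightarrow> int n dvd k}"

text \<open>(m) = m Lambda_n: finite sums of products a*g, a in m, g in Lambda_n.\<close>
definition mLam :: "('r::comm_ring_1 \<Rightarrow> 'r) \<Rightarrow> 'r set \<Rightarrow> 'r set \<Rightarrow> nat \<Rightarrow> 'r set \<Rightarrow> (int \<Rightarrow> 'r) set" where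
  "mLam \<sigma> H J n m = {f. \<exists>(F::nat set) a g. finite F \<and> (\<forall>i\<in>F. a i \<in> m \<and> g i \<in> Lam \<sigma> H J n) \<and>
        f = (\<lambda>k. \<Sum>i\<in>F. lmult \<sigma> (lconst (a i)) (g i) k)}"

text \<open>M_m is a Lambda_n/(m)-module: stable under Lambda_n and annihilated by (m).\<close>
definition is_LamQ_module :: "('r::comm_ring_1 \<Rightarrow> 'r) \<Rightarrow> 'r set \<Rightarrow> 'r set \<Rightarrow> nat \<Rightarrow>
    ((int \<Rightarrow> 'r) \<Rightarrow> 'm::ab_group_add \<Rightarrow> 'm) \<Rightarrow> 'r set \<Rightarrow> bool" where
  "is_LamQ_module \<sigma> H J n act m \<longleftrightarrow>
     (\<forall>f\<in>Lam \<sigma> H J n. \<forall>v\<in>wsp act m. act f v \<in> wsp act m) \<and>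
     (\<forall>f\<in>mLam \<sigma> H J n m. \<forall>v\<in>wsp act m. act f v = 0)"

definition is_Lam_submodule :: "('r::comm_ring_1 \<Rightarrow> 'r) \<Rightarrow> 'r set \<Rightarrow> 'r set \<Rightarrow> nat \<Rightarrow>
    ((int \<Rightarrow> 'r) \<Rightarrow> 'm::ab_group_add \<Rightarrow> 'm) \<Rightarrow> 'r set \<Rightarrow> 'm set \<Rightarrow> bool" where
  "is_Lam_submodule \<sigma> H J n act m N \<longleftrightarrow> N \<subseteq> wsp act m \<and> 0 \<in> N \<and>
     (\<forall>v\<in>N. \<forall>w\<in>N. v + w \<in> N) \<and> (\<forall>v\<in>N. - v \<in> N) \<and>
     (\<forall>f\<in>Lam \<sigma> H J n. \<forall>v\<in>N. act f v \<in> N)"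

definition simple_LamQ :: "('r::comm_ring_1 \<Rightarrow> 'r) \<Rightarrow> 'r set \<Rightarrow> 'r set \<Rightarrow> nat \<Rightarrow>
    ((int \<Rightarrow> 'r) \<Rightarrow> 'm::ab_group_add \<Rightarrow> 'm) \<Rightarrow> 'r set \<Rightarrow> bool" where
  "simple_LamQ \<sigma> H J n act m \<longleftrightarrow> is_LamQ_module \<sigma> H J n act m \<and> wsp act m \<noteq> {0} \<and>
     (\<forall>N. is_Lam_submodule \<sigma> H J n act m N \<longrightarrow> N = {0} \<or> N = wsp act m)"

text \<open>sigma acting on Lambda_n coefficientwise: sigma(a t^(kn)) = sigma(a) t^(kn).\<close>
definition lmap :: "('r \<Rightarrow> 'r) \<Rightarrow> (int \<Rightarrow> 'r) \<Rightarrow> int \<Rightarrow> 'r" where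
  "lmap g f = (\<lambda>k. g (f k))"

text \<open>phi is an isomorphism of Lambda_n/(sigma^i m)-modules M_(sigma^i m) -> twisted module
  ^(sigma^i) M_m, whose action is lambda . v = sigma^(-i)(lambda) v.\<close>
definition twisted_iso :: "('r::comm_ring_1 \<Rightarrow> 'r) \<Rightarrow> 'r set \<Rightarrow> 'r set \<Rightarrow> nat \<Rightarrow>
    ((int \<Rightarrow> 'r) \<Rightarrow> 'm::ab_group_add \<Rightarrow> 'm) \<Rightarrow> 'r set \<Rightarrow> int \<Rightarrow> ('m \<Rightarrow> 'm) \<Rightarrow> bool" where
  "twisted_iso \<sigma> H J n act m i \<phi> \<longleftrightarrow>
     bij_betw \<phi> (wsp act (spow \<sigma> i ` m)) (wsp act m) \<and>
     (\<forall>v\<in>wsp act (spow \<sigma> i ` m). \<forall>w\<in>wsp act (spow \<sigma> i ` m). \<phi> (v + w) = \<phi> v + \<phi> w) \<and>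
     (\<forall>f\<in>Lam \<sigma> H J n. \<forall>v\<in>wsp act (spow \<sigma> i ` m).
        \<phi> (act f v) = act (lmap (spow \<sigma> (- i)) f) (\<phi> v))"

end

theory Submission
  imports Defs
begin

lemma ring_aut_zero: "ring_aut g \<Longrightarrow> g 0 = 0"
  unfolding ring_aut_def by (metis add.right_neutral add_left_cancel)

lemma ring_aut_neg: "ring_aut g \<Longrightarrow> g (- a) = - g a"
proof -
  assume a: "ring_aut g"
  have "g (- a) + g a = 0" using a ring_aut_zero[OF a] unfolding ring_aut_def by (metis add.left_inverse)
  thus ?thesis by (simp add: eq_neg_iff_add_eq_0)
qed

lemma ring_aut_diff: "ring_aut g \<Longrightarrow> g (a - b) = g a - g b"
  using ring_aut_neg[of g b] unfolding ring_aut_def by (metis diff_conv_add_uminus)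

lemma ring_aut_inj: "ring_aut g \<Longrightarrow> inj g"
  unfolding ring_aut_def bij_def by auto

lemma ring_aut_inv: "ring_aut g \<Longrightarrow> ring_aut (inv g)"
proof -
  assume a: "ring_aut g"
  hence b: "bij g" and ad: "\<And>x y. g (x+y) = g x + g y" and mu: "\<And>x y. g (x*y) = g x * g y" and o: "g 1 = 1"
    unfolding ring_aut_def by auto
  have fi: "\<And>x. g (inv g x) = x" using b by (meson bij_inv_eq_iff)
  have if_: "\<And>x. inv g (g x) = x" using b by (metis bij_is_inj inv_f_f)
  show ?thesis unfolding ring_aut_def
  proof (intro conjI allI)
    show "bij (inv g)" using b by (simp add: bij_imp_bij_inv)
    fix x y
    show "inv g (x + y) = inv g x + inv g y" by (metis ad fi if_)
    show "inv g (x * y) = inv g x * inv g y" by (metis mu fi if_)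
  next
    show "inv g 1 = 1" by (metis o if_)
  qed
qed

lemma ring_aut_comp: "ring_aut f \<Longrightarrow> ring_aut g \<Longrightarrow> ring_aut (f \<circ> g)"
  unfolding ring_aut_def by (auto simp: bij_comp)

lemma ring_aut_id: "ring_aut id"
  unfolding ring_aut_def by auto

lemma ring_aut_funpow: "ring_aut g \<Longrightarrow> ring_aut (g ^^ k)"
  by (induction k) (auto simp: ring_aut_id ring_aut_comp)

lemma spow_aut: "ring_aut s \<Longrightarrow> ring_aut (spow s k)"
  unfolding spow_def by (auto simp: ring_aut_funpow ring_aut_inv)

lemma spow_succ: "bij s \<Longrightarrow> spow s (k+1) = s \<circ> spow s k"
proof -
  assume b: "bij s"
  have si: "s \<circ> inv s = id" using b by (metis bij_is_surj surj_iff)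
  show ?thesis
  proof (cases "k \<ge> 0")
    case True
    then have "nat (k+1) = Suc (nat k)" by simp
    then show ?thesis using True unfolding spow_def by simp
  next
    case False
    then have e: "nat (-k) = Suc (nat (- (k+1)))" by simp
    show ?thesis
    proof (cases "k = -1")
      case True then show ?thesis using si unfolding spow_def by simp
    next
      case F2: False
      then have "\<not> k + 1 \<ge> 0" using False by simp
      have "spow s k = inv s \<circ> (inv s ^^ nat (- (k+1)))" using False e unfolding spow_def
        by (simp only: if_False funpow.simps)
      moreover have "spow s (k+1) = inv s ^^ nat (- (k+1))" using F2 False unfolding spow_def by simp
      ultimately show ?thesis by (simp add: comp_assoc[symmetric] si)
    qed
  qed
qed


lemma spow_pred: "bij s \<Longrightarrow> spow s (k - 1) = inv s \<circ> spow s k"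
proof -
  assume b: "bij s"
  have is_: "inv s \<circ> s = id" using b by (metis bij_is_inj inv_o_cancel)
  have "spow s ((k-1)+1) = s \<circ> spow s (k-1)" by (rule spow_succ[OF b])
  hence "inv s \<circ> spow s k = (inv s \<circ> s) \<circ> spow s (k-1)" by (simp add: comp_assoc)
  thus ?thesis using is_ by simp
qed

lemma spow_zero[simp]: "spow s 0 = id"
  unfolding spow_def by simp

lemma spow_one: "spow s 1 = s"
  unfolding spow_def by simp

lemma spow_add: "bij s \<Longrightarrow> spow s (a + b) = spow s a \<circ> spow s b"
proof (induction a rule: int_induct[where k=0])
  case base then show ?case by simp
next
  case (step1 i)
  have "spow s (i + 1 + b) = spow s ((i + b) + 1)" by (simp add: ac_simps)
  also have "\<dots> = s \<circ> spow s (i+b)" using spow_succ[OF step1(3)] by blast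
  also have "\<dots> = s \<circ> spow s i \<circ> spow s b" using step1 by (simp add: comp_def)
  also have "\<dots> = spow s (i+1) \<circ> spow s b" using spow_succ[OF step1(3)] by simp
  finally show ?case .
next
  case (step2 i)
  have "spow s (i - 1 + b) = spow s ((i + b) - 1)" by (simp add: algebra_simps)
  also have "\<dots> = inv s \<circ> spow s (i+b)" using spow_pred[OF step2(3)] by blast
  also have "\<dots> = inv s \<circ> spow s i \<circ> spow s b" using step2 by (simp add: comp_def)
  also have "\<dots> = spow s (i-1) \<circ> spow s b" using spow_pred[OF step2(3)] by simp
  finally show ?case .
qed

lemma spow_add_app: "bij s \<Longrightarrow> spow s (a + b) x = spow s a (spow s b x)"
  using spow_add by (metis comp_apply)

lemma spow_cancel: "bij s \<Longrightarrow> spow s (- a) (spow s a x) = x"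
  using spow_add_app[of s "-a" a x] by simp

lemma spow_cancel2: "bij s \<Longrightarrow> spow s a (spow s (- a) x) = x"
  using spow_add_app[of s a "-a" x] by simp

lemma spow_period: "bij s \<Longrightarrow> s ^^ n = id \<Longrightarrow> spow s (int n * q) = id"
proof (induction q rule: int_induct[where k=0])
  case base then show ?case by simp
next
  case (step1 i)
  have "spow s (int n * (i+1)) = spow s (int n + int n * i)" by (simp add: algebra_simps)
  also have "\<dots> = spow s (int n) \<circ> spow s (int n * i)" using spow_add[OF step1(3)] by blast
  also have "spow s (int n) = id" using step1(4) unfolding spow_def by (simp only: of_nat_0_le_iff if_True nat_int)
  finally show ?case using step1 by (simp add: id_def)
next
  case (step2 i)
  have "spow s (int n * i) = spow s (int n + int n * (i - 1))" by (simp add: algebra_simps)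
  also have "\<dots> = spow s (int n) \<circ> spow s (int n * (i - 1))" using spow_add[OF step2(3)] by blast
  also have "spow s (int n) = id" using step2(4) unfolding spow_def by (simp only: of_nat_0_le_iff if_True nat_int)
  finally have "spow s (int n * (i - 1)) = id" using step2 by (simp add: id_def)
  then show ?case .
qed

lemma spow_mod: "bij s \<Longrightarrow> s ^^ n = id \<Longrightarrow> spow s k = spow s (k mod int n)"
proof -
  assume b: "bij s" and p: "s ^^ n = id"
  have "k = int n * (k div int n) + k mod int n" by simp
  hence "spow s k = spow s (int n * (k div int n)) \<circ> spow s (k mod int n)"
    by (metis spow_add[OF b])
  thus ?thesis using spow_period[OF b p] by simp
qed

lemma spow_dvd: "bij s \<Longrightarrow> s ^^ n = id \<Longrightarrow> int n dvd k \<Longrightarrow> spow s k = id"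
  using spow_period by (metis dvd_def)


lemma ideal_0: "is_ideal I \<Longrightarrow> 0 \<in> I" unfolding is_ideal_def by auto
lemma ideal_add: "is_ideal I \<Longrightarrow> x \<in> I \<Longrightarrow> y \<in> I \<Longrightarrow> x + y \<in> I" unfolding is_ideal_def by auto
lemma ideal_lmult: "is_ideal I \<Longrightarrow> x \<in> I \<Longrightarrow> r * x \<in> I" unfolding is_ideal_def by auto
lemma ideal_rmult: "is_ideal I \<Longrightarrow> x \<in> I \<Longrightarrow> x * r \<in> I" unfolding is_ideal_def by (metis mult.commute)
lemma ideal_neg: "is_ideal I \<Longrightarrow> x \<in> I \<Longrightarrow> - x \<in> I" using ideal_lmult[of I x "-1"] by simp
lemma ideal_diff: "is_ideal I \<Longrightarrow> x \<in> I \<Longrightarrow> y \<in> I \<Longrightarrow> x - y \<in> I"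
  using ideal_add ideal_neg by (metis diff_conv_add_uminus)
lemma ideal_sum: "is_ideal I \<Longrightarrow> (\<forall>i\<in>F. f i \<in> I) \<Longrightarrow> sum f F \<in> I"
  by (induction F rule: infinite_finite_induct) (auto simp: ideal_0 ideal_add)
lemma ideal_UNIV: "is_ideal UNIV" unfolding is_ideal_def by auto

lemma iprod_ideal: "is_ideal (iprod A B)"
  unfolding iprod_def is_ideal_def by auto
lemma iprod_gen: "a \<in> A \<Longrightarrow> b \<in> B \<Longrightarrow> a * b \<in> iprod A B"
  unfolding iprod_def by blast
lemma iprod_least: "is_ideal I \<Longrightarrow> (\<And>a b. a \<in> A \<Longrightarrow> b \<in> B \<Longrightarrow> a * b \<in> I) \<Longrightarrow> iprod A B \<subseteq> I"
  unfolding iprod_def by blast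
lemma iprod_sub_left: "is_ideal A \<Longrightarrow> iprod A B \<subseteq> A"
  by (rule iprod_least) (auto simp: ideal_rmult)
lemma iprod_mono: "A \<subseteq> A' \<Longrightarrow> B \<subseteq> B' \<Longrightarrow> iprod A B \<subseteq> iprod A' B'"
  by (rule iprod_least) (simp add: iprod_ideal, meson iprod_gen subsetD)

lemma preimage_ideal: "ring_aut g \<Longrightarrow> is_ideal I \<Longrightarrow> is_ideal {x. g x \<in> I}"
  unfolding is_ideal_def using ring_aut_zero[of g] unfolding ring_aut_def by auto

lemma image_ideal: "ring_aut g \<Longrightarrow> is_ideal I \<Longrightarrow> is_ideal (g ` I)"
proof -
  assume a: "ring_aut g" and i: "is_ideal I"
  have ad: "\<And>x y. g (x+y) = g x + g y" and mu: "\<And>x y. g (x*y) = g x * g y" and b: "bij g"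
    using a unfolding ring_aut_def by auto
  have sur: "\<And>r. g (inv g r) = r" using b by (meson bij_inv_eq_iff)
  show ?thesis unfolding is_ideal_def
  proof (intro conjI ballI allI)
    show "0 \<in> g ` I" using ring_aut_zero[OF a] ideal_0[OF i] by force
  next
    fix x y assume "x \<in> g ` I" "y \<in> g ` I"
    then obtain x' y' where "x' \<in> I" "y' \<in> I" "x = g x'" "y = g y'" by auto
    thus "x + y \<in> g ` I" using ad ideal_add[OF i] by (metis image_eqI)
  next
    fix r x assume "x \<in> g ` I"
    then obtain x' where "x' \<in> I" "x = g x'" by auto
    hence "r * x = g (inv g r * x')" using mu sur by simp
    thus "r * x \<in> g ` I" using ideal_lmult[OF i \<open>x' \<in> I\<close>] by blast
  qed
qed

primrec prodI :: "('r::comm_ring_1 \<Rightarrow> 'r) \<Rightarrow> 'r set \<Rightarrow> int \<Rightarrow> int \<Rightarrow> nat \<Rightarrow> 'r set" where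
  "prodI s X d a 0 = UNIV"
| "prodI s X d a (Suc k) = iprod (prodI s X d a k) (spow s (a + d * int k) ` X)"

lemma prodI_ideal: "is_ideal (prodI s X d a k)"
  by (cases k) (auto simp: ideal_UNIV iprod_ideal)

lemma Jpow_prodI: "Jpow s J k = prodI s J 1 0 k"
  by (induction k) auto

lemma Hpow_prodI: "Hpow s H k = prodI s H (-1) (-1) k"
  by (induction k) (auto simp: algebra_simps)

lemma prodI_shift:
  assumes "ring_aut s"
  shows "x \<in> prodI s X d a k \<Longrightarrow> spow s j x \<in> prodI s X d (a + j) k"
proof (induction k arbitrary: x)
  case 0 then show ?case by simp
next
  case (Suc k)
  have b: "bij s" using assms unfolding ring_aut_def by auto
  have g: "ring_aut (spow s j)" using spow_aut[OF assms] .
  have "iprod (prodI s X d a k) (spow s (a + d * int k) ` X) \<subseteq> {x. spow s j x \<in> prodI s X d (a + j) (Suc k)}"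
  proof (rule iprod_least)
    show "is_ideal {x. spow s j x \<in> prodI s X d (a + j) (Suc k)}"
      by (rule preimage_ideal[OF g prodI_ideal])
  next
    fix p q assume p: "p \<in> prodI s X d a k" and q: "q \<in> spow s (a + d * int k) ` X"
    then obtain y where y: "y \<in> X" "q = spow s (a + d * int k) y" by auto
    have "spow s (j + (a + d*int k)) y = spow s j (spow s (a + d * int k) y)" by (rule spow_add_app[OF b])
    moreover have "j + (a + d*int k) = a + j + d * int k" by simp
    ultimately have "spow s j q = spow s (a + j + d * int k) y" using y by simp
    hence "spow s j q \<in> spow s (a + j + d * int k) ` X" using y by auto
    moreover have "spow s j (p * q) = spow s j p * spow s j q" using g unfolding ring_aut_def by auto
    ultimately show "p * q \<in> {x. spow s j x \<in> prodI s X d (a + j) (Suc k)}"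
      using Suc.IH[OF p] by (auto intro: iprod_gen)
  qed
  then show ?case using Suc.prems by auto
qed

lemma prodI_concat:
  "x \<in> prodI s X d a k \<Longrightarrow> y \<in> prodI s X d (a + d * int k) l \<Longrightarrow> x * y \<in> prodI s X d a (k + l)"
proof (induction l arbitrary: y)
  case 0 then show ?case using ideal_rmult[OF prodI_ideal] by simp
next
  case (Suc l)
  have "iprod (prodI s X d (a + d * int k) l) (spow s (a + d * int k + d * int l) ` X) \<subseteq> {y. x * y \<in> prodI s X d a (k + Suc l)}"
  proof (rule iprod_least)
    show "is_ideal {y. x * y \<in> prodI s X d a (k + Suc l)}"
      using prodI_ideal[of s X d a "k + Suc l"] unfolding is_ideal_def by (auto simp: algebra_simps)
  next
    fix p q assume p: "p \<in> prodI s X d (a + d * int k) l" and q: "q \<in> spow s (a + d * int k + d * int l) ` X"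
    have "x * p \<in> prodI s X d a (k + l)" using Suc.IH[OF Suc.prems(1) p] .
    moreover have "q \<in> spow s (a + d * int (k + l)) ` X" using q by (simp add: algebra_simps)
    ultimately have "(x * p) * q \<in> prodI s X d a (Suc (k + l))" by (auto intro: iprod_gen)
    thus "p * q \<in> {y. x * y \<in> prodI s X d a (k + Suc l)}" by (simp add: mult.assoc)
  qed
  then show ?case using Suc.prems by auto
qed

lemma prodI_prefix: "prodI s X d a (k + l) \<subseteq> prodI s X d a k"
proof (induction l)
  case 0 then show ?case by simp
next
  case (Suc l)
  have "prodI s X d a (k + Suc l) \<subseteq> prodI s X d a (k + l)"
    using iprod_sub_left[OF prodI_ideal] by simp
  then show ?case using Suc by blast
qed

lemma prodI_front: "prodI s X d a (k + l) \<subseteq> prodI s X d (a + d * int k) l"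
proof (induction l)
  case 0 then show ?case by simp
next
  case (Suc l)
  have e: "a + d * int (k + l) = a + d * int k + d * int l" by (simp add: algebra_simps)
  have "prodI s X d a (k + Suc l) = iprod (prodI s X d a (k+l)) (spow s (a + d * int (k + l)) ` X)" by simp
  also have "\<dots> \<subseteq> iprod (prodI s X d (a + d*int k) l) (spow s (a + d * int (k + l)) ` X)"
    by (rule iprod_mono[OF Suc.IH]) simp
  also have "\<dots> = prodI s X d (a + d*int k) (Suc l)" by (simp only: prodI.simps e)
  finally show ?case .
qed

lemma prodI_rot:
  assumes b: "bij s" and p: "spow s (d * int k) = id"
  shows "prodI s X d (a + d) k \<subseteq> prodI s X d a k"
proof (cases k)
  case 0 then show ?thesis by simp
next
  case (Suc k')
  have e: "spow s (a + d + d * int k') = spow s a"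
  proof -
    have "spow s (a + d + d * int k') = spow s (a + d * int k)" using Suc by (simp add: algebra_simps)
    also have "\<dots> = spow s a" using spow_add[OF b, of a "d * int k"] p by simp
    finally show ?thesis .
  qed
  have "iprod (prodI s X d (a + d) k') (spow s (a + d + d * int k') ` X) \<subseteq> prodI s X d a k"
  proof (rule iprod_least)
    show "is_ideal (prodI s X d a k)" by (rule prodI_ideal)
  next
    fix p q assume p: "p \<in> prodI s X d (a + d) k'" and q: "q \<in> spow s (a + d + d * int k') ` X"
    have "q \<in> prodI s X d a 1" using q e iprod_gen[of 1 UNIV q] by simp
    moreover have "p \<in> prodI s X d (a + d * int 1) k'" using p by simp
    ultimately have "q * p \<in> prodI s X d a (1 + k')" by (rule prodI_concat)
    thus "p * q \<in> prodI s X d a k" using Suc by (simp add: mult.commute)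
  qed
  thus ?thesis using Suc by simp
qed


lemma Iseq_prodI: "Iseq s H J k = (if k \<ge> 0 then prodI s J 1 0 (nat k) else prodI s H (-1) (-1) (nat (-k)))"
  unfolding Iseq_def by (simp add: Jpow_prodI Hpow_prodI)

lemma Iseq_ideal: "is_ideal (Iseq s H J k)"
  unfolding Iseq_prodI by (simp add: prodI_ideal)

lemma Iseq_0: "Iseq s H J 0 = UNIV"
  unfolding Iseq_def by simp

lemma Iseq_mult:
  assumes a: "ring_aut s" and x: "x \<in> Iseq s H J k" and y: "y \<in> Iseq s H J l"
  shows "x * spow s k y \<in> Iseq s H J (k + l)"
proof -
  have b: "bij s" using a unfolding ring_aut_def by auto
  show ?thesis
  proof (cases "k \<ge> 0")
    case k: True
    show ?thesis
    proof (cases "l \<ge> 0")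
      case l: True
      have x': "x \<in> prodI s J 1 0 (nat k)" using x k unfolding Iseq_prodI by simp
      have "spow s k y \<in> prodI s J 1 (0 + k) (nat l)" using y l unfolding Iseq_prodI
        by (intro prodI_shift[OF a]) simp
      hence "spow s k y \<in> prodI s J 1 (0 + 1 * int (nat k)) (nat l)" using k by simp
      from prodI_concat[OF x' this] have "x * spow s k y \<in> prodI s J 1 0 (nat k + nat l)" .
      moreover have "nat k + nat l = nat (k + l)" using k l by simp
      ultimately show ?thesis using k l unfolding Iseq_prodI by simp
    next
      case l: False
      have y': "y \<in> prodI s H (-1) (-1) (nat (-l))" using y l unfolding Iseq_prodI by simp
      show ?thesis
      proof (cases "k + l \<ge> 0")
        case kl: True
        have x0: "x \<in> prodI s J 1 0 (nat k)" using x k unfolding Iseq_prodI by simp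
        have eq: "nat k = nat (k+l) + (nat k - nat (k+l))" using kl l by simp
        have x': "x \<in> prodI s J 1 0 (nat (k+l) + (nat k - nat (k+l)))" using x0 eq by metis
        hence "x \<in> prodI s J 1 0 (nat (k+l))" using prodI_prefix[of s J 1 0 "nat (k+l)" "nat k - nat (k+l)"] by blast
        thus ?thesis using kl unfolding Iseq_prodI by (simp add: ideal_rmult[OF prodI_ideal])
      next
        case kl: False
        have "spow s k y \<in> prodI s H (-1) (-1 + k) (nat (-l))" by (rule prodI_shift[OF a y'])
        moreover have "nat (-l) = nat k + nat (-(k+l))" using k kl by simp
        ultimately have "spow s k y \<in> prodI s H (-1) (-1 + k) (nat k + nat (-(k+l)))" by simp
        hence "spow s k y \<in> prodI s H (-1) (-1 + k + (-1) * int (nat k)) (nat (-(k+l)))"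
          using prodI_front[of s H "-1" "-1 + k" "nat k" "nat (-(k+l))"] by blast
        hence "spow s k y \<in> prodI s H (-1) (-1) (nat (-(k+l)))" using k by simp
        thus ?thesis using kl unfolding Iseq_prodI by (simp add: ideal_lmult[OF prodI_ideal])
      qed
    qed
  next
    case k: False
    have x': "x \<in> prodI s H (-1) (-1) (nat (-k))" using x k unfolding Iseq_prodI by simp
    show ?thesis
    proof (cases "l \<ge> 0")
      case l: True
      have y': "y \<in> prodI s J 1 0 (nat l)" using y l unfolding Iseq_prodI by simp
      show ?thesis
      proof (cases "k + l > 0")
        case kl: True
        have "spow s k y \<in> prodI s J 1 (0 + k) (nat l)" by (rule prodI_shift[OF a y'])
        moreover have "nat l = nat (-k) + nat (k+l)" using k kl by simp
        ultimately have "spow s k y \<in> prodI s J 1 (0 + k) (nat (-k) + nat (k+l))" by simp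
        hence "spow s k y \<in> prodI s J 1 (0 + k + 1 * int (nat (-k))) (nat (k+l))"
          using prodI_front[of s J 1 "0 + k" "nat (-k)" "nat (k+l)"] by blast
        hence "spow s k y \<in> prodI s J 1 0 (nat (k+l))" using k by simp
        thus ?thesis using kl unfolding Iseq_prodI by (simp add: ideal_lmult[OF prodI_ideal])
      next
        case kl: False
        show ?thesis
        proof (cases "k + l = 0")
          case True then show ?thesis by (simp add: Iseq_0)
        next
          case False
          have eq: "nat (-k) = nat (-(k+l)) + (nat (-k) - nat (-(k+l)))" using kl l by simp
          have "x \<in> prodI s H (-1) (-1) (nat (-(k+l)) + (nat (-k) - nat (-(k+l))))"
            using x' eq by metis
          hence "x \<in> prodI s H (-1) (-1) (nat (-(k+l)))" using prodI_prefix[of s H "-1" "-1" "nat (-(k+l))" "nat (-k) - nat (-(k+l))"] by blast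
          thus ?thesis using kl False unfolding Iseq_prodI by (simp add: ideal_rmult[OF prodI_ideal])
        qed
      qed
    next
      case l: False
      have y': "y \<in> prodI s H (-1) (-1) (nat (-l))" using y l unfolding Iseq_prodI by simp
      have "spow s k y \<in> prodI s H (-1) (-1 + k) (nat (-l))" by (rule prodI_shift[OF a y'])
      hence "spow s k y \<in> prodI s H (-1) (-1 + (-1) * int (nat (-k))) (nat (-l))" using k by simp
      from prodI_concat[OF x' this] have "x * spow s k y \<in> prodI s H (-1) (-1) (nat (-k) + nat (-l))" .
      moreover have "nat (-k) + nat (-l) = nat (-(k + l))" using k l by simp
      ultimately show ?thesis using k l unfolding Iseq_prodI by simp
    qed
  qed
qed

lemma closed_iter:
  assumes b: "bij s" and c: "\<And>x. x \<in> P \<Longrightarrow> spow s d x \<in> P"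
  shows "x \<in> P \<Longrightarrow> spow s (d * int m) x \<in> P"
proof (induction m arbitrary: x)
  case 0 then show ?case by simp
next
  case (Suc m)
  have "spow s (d * int (Suc m)) x = spow s d (spow s (d * int m) x)"
    using spow_add_app[OF b, of d "d * int m" x] by (simp add: algebra_simps)
  then show ?case using Suc c by simp
qed

lemma closed_all:
  assumes b: "bij s" and p: "s ^^ n = id" and n: "n > 0" and d: "d = 1 \<or> d = -1"
    and c: "\<And>x. x \<in> P \<Longrightarrow> spow s d x \<in> P" and x: "x \<in> P"
  shows "spow s j x \<in> P"
proof -
  define m where "m = nat ((d * j) mod int n)"
  have m: "int m = (d * j) mod int n" unfolding m_def using n by simp
  have "(d * int m) mod int n = j mod int n"
  proof (cases "d = 1")
    case True then show ?thesis using m by simp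
  next
    case False then have "d = -1" using d by simp
    then show ?thesis using m by (simp add: mod_minus_eq)
  qed
  hence "spow s (d * int m) = spow s j" using spow_mod[OF b p] by metis
  thus ?thesis using closed_iter[OF b c x] by metis
qed

lemma Iseq_inv:
  assumes a: "ring_aut s" and p: "s ^^ n = id" and dv: "int n dvd k" and x: "x \<in> Iseq s H J k"
  shows "spow s j x \<in> Iseq s H J k"
proof (cases "k = 0")
  case True then show ?thesis by (simp add: Iseq_0)
next
  case False
  have b: "bij s" using a unfolding ring_aut_def by auto
  have n: "n > 0" using dv False by (cases n) auto
  show ?thesis
  proof (cases "k \<ge> 0")
    case k: True
    have id: "spow s (1 * int (nat k)) = id" using spow_dvd[OF b p] dv k by simp
    have "\<And>x. x \<in> prodI s J 1 0 (nat k) \<Longrightarrow> spow s 1 x \<in> prodI s J 1 0 (nat k)"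
    proof -
      fix x assume "x \<in> prodI s J 1 0 (nat k)"
      hence "spow s 1 x \<in> prodI s J 1 (0 + 1) (nat k)" by (rule prodI_shift[OF a])
      thus "spow s 1 x \<in> prodI s J 1 0 (nat k)" using prodI_rot[OF b id, of J 0] by auto
    qed
    from closed_all[OF b p n _ this] show ?thesis using x k unfolding Iseq_prodI by simp
  next
    case k: False
    have id: "spow s (-1 * int (nat (-k))) = id" using spow_dvd[OF b p] dv k by simp
    have "\<And>x. x \<in> prodI s H (-1) (-1) (nat (-k)) \<Longrightarrow> spow s (-1) x \<in> prodI s H (-1) (-1) (nat (-k))"
    proof -
      fix x assume "x \<in> prodI s H (-1) (-1) (nat (-k))"
      hence "spow s (-1) x \<in> prodI s H (-1) (-1 + -1) (nat (-k))" by (rule prodI_shift[OF a])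
      thus "spow s (-1) x \<in> prodI s H (-1) (-1) (nat (-k))" using prodI_rot[OF b id, of H "-1"] by auto
    qed
    from closed_all[OF b p n _ this] show ?thesis using x k unfolding Iseq_prodI by simp
  qed
qed

lemma prodI_notin:
  assumes P: "is_prime_ideal P" and X: "\<forall>j. \<not> spow s j ` X \<subseteq> P"
  shows "\<not> prodI s X d a k \<subseteq> P"
proof (induction k)
  case 0 then show ?case using P unfolding is_prime_ideal_def by auto
next
  case (Suc k)
  then obtain p where p: "p \<in> prodI s X d a k" "p \<notin> P" by auto
  obtain q where q: "q \<in> spow s (a + d * int k) ` X" "q \<notin> P" using X by blast
  have "p * q \<notin> P" using P p q unfolding is_prime_ideal_def by auto
  moreover have "p * q \<in> prodI s X d a (Suc k)" using p q by (simp add: iprod_gen)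
  ultimately show ?case by blast
qed

lemma Iseq_notin:
  assumes P: "is_prime_ideal P" and "\<forall>j. \<not> spow s j ` H \<subseteq> P" "\<forall>j. \<not> spow s j ` J \<subseteq> P"
  shows "\<exists>x\<in>Iseq s H J k. x \<notin> P"
proof -
  have "\<not> prodI s J 1 0 (nat k) \<subseteq> P" "\<not> prodI s H (-1) (-1) (nat (-k)) \<subseteq> P"
    using prodI_notin[OF P] assms(2,3) by blast+
  thus ?thesis unfolding Iseq_prodI by (cases "k \<ge> 0") auto
qed


lemma max_unit:
  assumes m: "is_maximal X" and r: "r \<notin> X"
  shows "\<exists>x c. x \<in> X \<and> 1 = x + c * r"
proof -
  have i: "is_ideal X" using m unfolding is_maximal_def by auto
  define I where "I = {z. \<exists>x c. x \<in> X \<and> z = x + c * r}"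
  have "is_ideal I" unfolding is_ideal_def
  proof (intro conjI ballI allI)
    have "0 = 0 + 0 * r" by simp
    thus "0 \<in> I" unfolding I_def using ideal_0[OF i] by blast
  next
    fix a b assume "a \<in> I" "b \<in> I"
    then obtain x1 c1 x2 c2 where h: "x1 \<in> X" "x2 \<in> X" "a = x1 + c1 * r" "b = x2 + c2 * r"
      unfolding I_def by blast
    have "a + b = (x1 + x2) + (c1 + c2) * r" using h by (simp add: algebra_simps)
    moreover have "x1 + x2 \<in> X" using ideal_add[OF i h(1,2)] .
    ultimately show "a + b \<in> I" unfolding I_def by blast
  next
    fix t a assume "a \<in> I"
    then obtain x1 c1 where h: "x1 \<in> X" "a = x1 + c1 * r" unfolding I_def by blast
    have "t * a = t * x1 + (t * c1) * r" using h by (simp add: algebra_simps)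
    moreover have "t * x1 \<in> X" using ideal_lmult[OF i h(1)] .
    ultimately show "t * a \<in> I" unfolding I_def by blast
  qed
  moreover have "X \<subseteq> I"
  proof
    fix x assume "x \<in> X"
    moreover have "x = x + 0 * r" by simp
    ultimately show "x \<in> I" unfolding I_def by blast
  qed
  moreover have "r \<in> I"
  proof -
    have "r = 0 + 1 * r" by simp
    thus ?thesis unfolding I_def using ideal_0[OF i] by blast
  qed
  ultimately have "I = X \<or> I = UNIV" using m unfolding is_maximal_def by blast
  hence "I = UNIV" using r \<open>r \<in> I\<close> by blast
  hence "1 \<in> I" by simp
  thus ?thesis unfolding I_def by blast
qed

lemma max_prime: "is_maximal X \<Longrightarrow> is_prime_ideal X"
proof -
  assume m: "is_maximal X"
  have i: "is_ideal X" using m unfolding is_maximal_def by auto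
  show ?thesis unfolding is_prime_ideal_def
  proof (intro conjI allI impI)
    show "is_ideal X" by fact
    show "X \<noteq> UNIV" using m unfolding is_maximal_def by auto
    fix a b assume ab: "a * b \<in> X"
    show "a \<in> X \<or> b \<in> X"
    proof (cases "a \<in> X")
      case True thus ?thesis by simp
    next
      case False
      then obtain x c where "x \<in> X" "1 = x + c * a" using max_unit[OF m] by blast
      hence "b = (x + c * a) * b" by simp
      hence "b = x * b + c * (a * b)" by (simp add: algebra_simps)
      moreover have "x * b \<in> X" using ideal_rmult[OF i \<open>x \<in> X\<close>] .
      moreover have "c * (a * b) \<in> X" using ideal_lmult[OF i ab] .
      ultimately have "b \<in> X" using ideal_add[OF i, of "x * b" "c * (a * b)"] by simp
      thus ?thesis by simp
    qed
  qed
qed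

lemma max_image:
  assumes g: "ring_aut g" and m: "is_maximal X"
  shows "is_maximal (g ` X)"
proof -
  have i: "is_ideal X" using m unfolding is_maximal_def by auto
  have b: "bij g" using g unfolding ring_aut_def by auto
  have gi: "ring_aut (inv g)" by (rule ring_aut_inv[OF g])
  have c1: "\<And>x. inv g (g x) = x" using b by (metis bij_is_inj inv_f_f)
  have c2: "\<And>x. g (inv g x) = x" using b by (meson bij_inv_eq_iff)
  show ?thesis unfolding is_maximal_def
  proof (intro conjI allI impI)
    show "is_ideal (g ` X)" by (rule image_ideal[OF g i])
    show "g ` X \<noteq> UNIV"
    proof
      assume "g ` X = UNIV"
      have "X = UNIV"
      proof (rule set_eqI, rule iffI)
        fix z assume "z \<in> (UNIV :: 'a set)"
        have "g z \<in> g ` X" using \<open>g ` X = UNIV\<close> by simp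
        then obtain x where "x \<in> X" "g z = g x" by auto
        hence "z = x" using c1 by metis
        thus "z \<in> X" using \<open>x \<in> X\<close> by simp
      qed simp
      thus False using m unfolding is_maximal_def by auto
    qed
  next
    fix I assume a: "is_ideal I \<and> g ` X \<subseteq> I"
    have "is_ideal (inv g ` I)" using image_ideal[OF gi] a by blast
    moreover have "X \<subseteq> inv g ` I"
    proof
      fix x assume "x \<in> X" hence "g x \<in> I" using a by auto
      thus "x \<in> inv g ` I" using c1[of x] by (metis image_eqI)
    qed
    ultimately have "inv g ` I = X \<or> inv g ` I = UNIV" using m unfolding is_maximal_def by blast
    moreover have "g ` inv g ` I = I" using c2 by (simp add: image_comp comp_def)
    moreover have "g ` UNIV = UNIV" using b by (simp add: bij_is_surj)
    ultimately show "I = g ` X \<or> I = UNIV" by auto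
  qed
qed


definition mon :: "'r::zero \<Rightarrow> int \<Rightarrow> int \<Rightarrow> 'r" where
  "mon a k = (\<lambda>j. if j = k then a else 0)"

lemma lconst_mon: "lconst a = mon a 0" unfolding lconst_def mon_def by auto

lemma mon_zero: "mon 0 k = (\<lambda>_. 0)" unfolding mon_def by auto

lemma mon_BR: "a \<in> Iseq s H J k \<Longrightarrow> mon a k \<in> BR s H J"
proof -
  assume a: "a \<in> Iseq s H J k"
  have "{j. mon a k j \<noteq> 0} \<subseteq> {k}" unfolding mon_def by auto
  hence "finite {j. mon a k j \<noteq> 0}" using finite_subset by blast
  moreover have "\<forall>j. mon a k j \<in> Iseq s H J j" unfolding mon_def using a ideal_0[OF Iseq_ideal] by auto
  ultimately show ?thesis unfolding BR_def by auto
qed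

lemma lconst_BR: "lconst a \<in> BR s H J"
  unfolding lconst_mon by (rule mon_BR) (simp add: Iseq_0)

lemma zero_BR: "(\<lambda>_. 0) \<in> BR s H J"
  unfolding BR_def using ideal_0[OF Iseq_ideal] by auto

lemma BR_ladd: "f \<in> BR s H J \<Longrightarrow> g \<in> BR s H J \<Longrightarrow> ladd f g \<in> BR s H J"
proof -
  assume f: "f \<in> BR s H J" and g: "g \<in> BR s H J"
  have "{k. ladd f g k \<noteq> 0} \<subseteq> {k. f k \<noteq> 0} \<union> {k. g k \<noteq> 0}" unfolding ladd_def by auto
  moreover have "finite {k. f k \<noteq> 0}" "finite {k. g k \<noteq> 0}" using f g unfolding BR_def by auto
  ultimately have "finite {k. ladd f g k \<noteq> 0}" using finite_subset by blast
  moreover have "\<forall>k. ladd f g k \<in> Iseq s H J k"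
  proof
    fix k
    have "f k \<in> Iseq s H J k" "g k \<in> Iseq s H J k" using f g unfolding BR_def by auto
    thus "ladd f g k \<in> Iseq s H J k" unfolding ladd_def by (rule ideal_add[OF Iseq_ideal])
  qed
  ultimately show ?thesis unfolding BR_def by auto
qed

lemma lmult_mon:
  assumes a: "ring_aut s"
  shows "lmult s (mon a k) (mon b l) = mon (a * spow s k b) (k + l)"
proof (rule ext)
  fix j
  show "lmult s (mon a k) (mon b l) j = mon (a * spow s k b) (k + l) j"
  proof (cases "a = 0")
    case True
    then show ?thesis unfolding lmult_def mon_def by simp
  next
    case False
    then have "{i. mon a k i \<noteq> 0} = {k}" unfolding mon_def by auto
    then have "lmult s (mon a k) (mon b l) j = a * spow s k (mon b l (j - k))"
      unfolding lmult_def by (simp add: mon_def)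
    also have "\<dots> = mon (a * spow s k b) (k + l) j"
      unfolding mon_def using ring_aut_zero[OF spow_aut[OF a]] by auto
    finally show ?thesis .
  qed
qed

lemma lmult_lconst: "lmult s (lconst a) g = (\<lambda>j. a * g j)"
proof (rule ext)
  fix j
  show "lmult s (lconst a) g j = a * g j"
  proof (cases "a = 0")
    case True
    then show ?thesis unfolding lmult_def lconst_def by simp
  next
    case False
    then have "{i. lconst a i \<noteq> 0} = {0}" unfolding lconst_def by auto
    then show ?thesis unfolding lmult_def by (simp add: lconst_def)
  qed
qed

context
  fixes s :: "'r::comm_ring_1 \<Rightarrow> 'r" and H J :: "'r set" and act :: "(int \<Rightarrow> 'r) \<Rightarrow> 'm::ab_group_add \<Rightarrow> 'm"
  assumes M: "is_B_module s H J act"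
begin

lemma act_add: "f \<in> BR s H J \<Longrightarrow> act f (v + w) = act f v + act f w"
  using M unfolding is_B_module_def by auto

lemma act_ladd: "f \<in> BR s H J \<Longrightarrow> g \<in> BR s H J \<Longrightarrow> act (ladd f g) v = act f v + act g v"
  using M unfolding is_B_module_def by auto

lemma act_comp: "f \<in> BR s H J \<Longrightarrow> g \<in> BR s H J \<Longrightarrow> act f (act g v) = act (lmult s f g) v"
  using M unfolding is_B_module_def by auto

lemma act_one: "act (lconst 1) v = v"
  using M unfolding is_B_module_def by auto

lemma act_zero_fun: "act (\<lambda>_. 0) v = 0"
proof -
  have "ladd (\<lambda>_. 0) (\<lambda>_. 0) = (\<lambda>_. (0::'r))" unfolding ladd_def by simp
  hence "act (\<lambda>_. 0) v = act (\<lambda>_. 0) v + act (\<lambda>_. 0) v" using act_ladd[OF zero_BR zero_BR] by metis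
  thus ?thesis by simp
qed

lemma act_mon0: "act (mon 0 k) v = 0"
  using act_zero_fun by (simp add: mon_zero)

lemma act_0: "f \<in> BR s H J \<Longrightarrow> act f 0 = 0"
  using act_add[of f 0 0] by simp

lemma act_neg: "f \<in> BR s H J \<Longrightarrow> act f (- v) = - act f v"
proof -
  assume f: "f \<in> BR s H J"
  have "act f v + act f (- v) = 0" using act_add[OF f, of v "-v"] act_0[OF f] by simp
  thus ?thesis using minus_unique by metis
qed

lemma act_sum: "f \<in> BR s H J \<Longrightarrow> act f (\<Sum>i\<in>F. u i) = (\<Sum>i\<in>F. act f (u i))"
  by (induction F rule: infinite_finite_induct) (auto simp: act_0 act_add)

lemma act_mon_comp:
  assumes a: "ring_aut s" and "a \<in> Iseq s H J k" and "b \<in> Iseq s H J l"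
  shows "act (mon a k) (act (mon b l) v) = act (mon (a * spow s k b) (k + l)) v"
  using act_comp[OF mon_BR mon_BR, OF assms(2,3)] lmult_mon[OF a] by simp

lemma act_decomp:
  assumes "finite S"
  shows "f \<in> BR s H J \<Longrightarrow> {k. f k \<noteq> 0} \<subseteq> S \<Longrightarrow> act f v = (\<Sum>k\<in>S. act (mon (f k) k) v)"
  using assms
proof (induction S arbitrary: f rule: finite_induct)
  case empty
  then have "f = (\<lambda>_. 0)" by auto
  then show ?case using act_zero_fun by simp
next
  case (insert x S)
  define g where "g = (\<lambda>k. if k = x then 0 else f k)"
  have fx: "f x \<in> Iseq s H J x" using insert.prems unfolding BR_def by auto
  have gB: "g \<in> BR s H J"
  proof -
    have "{k. g k \<noteq> 0} \<subseteq> {k. f k \<noteq> 0}" unfolding g_def by auto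
    hence "finite {k. g k \<noteq> 0}" using insert.prems unfolding BR_def using finite_subset by blast
    moreover have "\<forall>k. g k \<in> Iseq s H J k" using insert.prems ideal_0[OF Iseq_ideal] unfolding BR_def g_def by auto
    ultimately show ?thesis unfolding BR_def by auto
  qed
  have "f = ladd (mon (f x) x) g" unfolding ladd_def mon_def g_def by auto
  hence "act f v = act (mon (f x) x) v + act g v" using act_ladd[OF mon_BR[OF fx] gB] by metis
  moreover have "{k. g k \<noteq> 0} \<subseteq> S" using insert.prems(2) unfolding g_def by auto
  hence "act g v = (\<Sum>k\<in>S. act (mon (g k) k) v)"
    using insert.IH[OF gB] by auto
  moreover have "(\<Sum>k\<in>S. act (mon (g k) k) v) = (\<Sum>k\<in>S. act (mon (f k) k) v)"
    using insert.hyps(2) unfolding g_def by (intro sum.cong) auto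
  ultimately show ?case using insert.hyps by simp
qed

lemma act_funsum:
  "finite F \<Longrightarrow> (\<forall>i\<in>F. t i \<in> BR s H J) \<Longrightarrow>
     (\<lambda>j. \<Sum>i\<in>F. t i j) \<in> BR s H J \<and> act (\<lambda>j. \<Sum>i\<in>F. t i j) v = (\<Sum>i\<in>F. act (t i) v)"
proof (induction F rule: finite_induct)
  case empty
  then show ?case using zero_BR act_zero_fun by simp
next
  case (insert x F)
  have e: "(\<lambda>j. \<Sum>i\<in>insert x F. t i j) = ladd (t x) (\<lambda>j. \<Sum>i\<in>F. t i j)"
    unfolding ladd_def using insert.hyps by auto
  have tx: "t x \<in> BR s H J" using insert.prems by auto
  from insert.IH insert.prems have ih: "(\<lambda>j. \<Sum>i\<in>F. t i j) \<in> BR s H J"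
    "act (\<lambda>j. \<Sum>i\<in>F. t i j) v = (\<Sum>i\<in>F. act (t i) v)" by auto
  show ?case unfolding e using BR_ladd[OF tx ih(1)] act_ladd[OF tx ih(1)] ih(2) insert.hyps by simp
qed

lemma wsp_0: "0 \<in> wsp act X"
  unfolding wsp_def using act_0[OF lconst_BR] by auto

lemma wsp_add: "v \<in> wsp act X \<Longrightarrow> w \<in> wsp act X \<Longrightarrow> v + w \<in> wsp act X"
  unfolding wsp_def using act_add[OF lconst_BR] by auto

lemma wsp_neg: "v \<in> wsp act X \<Longrightarrow> - v \<in> wsp act X"
  unfolding wsp_def using act_neg[OF lconst_BR] by auto

lemma wsp_diff: "v \<in> wsp act X \<Longrightarrow> w \<in> wsp act X \<Longrightarrow> v - w \<in> wsp act X"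
  using wsp_add wsp_neg by (metis diff_conv_add_uminus)

lemma wsp_sum: "(\<forall>i\<in>F. u i \<in> wsp act X) \<Longrightarrow> (\<Sum>i\<in>F. u i) \<in> wsp act X"
  by (induction F rule: infinite_finite_induct) (auto simp: wsp_0 wsp_add)

lemma act_mon_wsp:
  assumes a: "ring_aut s" and ak: "a \<in> Iseq s H J k" and v: "v \<in> wsp act X"
  shows "act (mon a k) v \<in> wsp act (spow s k ` X)"
  unfolding wsp_def
proof (intro CollectI ballI)
  fix b assume "b \<in> spow s k ` X"
  then obtain c where c: "c \<in> X" "b = spow s k c" by auto
  have "act (lconst b) (act (mon a k) v) = act (mon (b * spow s 0 a) (0 + k)) v"
    unfolding lconst_mon by (rule act_mon_comp[OF a _ ak]) (simp add: Iseq_0)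
  also have "\<dots> = act (mon (a * spow s k c) (k + 0)) v" using c by (simp add: mult.commute)
  also have "\<dots> = act (mon a k) (act (mon c 0) v)"
    by (rule act_mon_comp[OF a ak, symmetric]) (simp add: Iseq_0)
  also have "act (mon c 0) v = 0" using v c unfolding wsp_def lconst_mon by auto
  finally show "act (lconst b) (act (mon a k) v) = 0" using act_0[OF mon_BR[OF ak]] by simp
qed

lemma scalar_wsp: "ring_aut s \<Longrightarrow> v \<in> wsp act X \<Longrightarrow> act (lconst r) v \<in> wsp act X"
  using act_mon_wsp[of r 0 v X] by (simp add: Iseq_0 lconst_mon)

lemma lconst_mult: "act (lconst c) (act (lconst r) v) = act (lconst (c * r)) v"
proof -
  have "lmult s (lconst c) (lconst r) = lconst (c * r)" by (simp only: lmult_lconst) (auto simp: lconst_def)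
  thus ?thesis using act_comp[OF lconst_BR lconst_BR] by metis
qed

lemma scalar_inv:
  assumes x: "x \<in> X" and e: "1 = x + c" and v: "v \<in> wsp act X"
  shows "act (lconst c) v = v"
proof -
  have "lconst 1 = ladd (lconst c) (lconst x)" unfolding ladd_def lconst_def using e by (auto simp: add.commute)
  hence "v = act (lconst c) v + act (lconst x) v" using act_one act_ladd[OF lconst_BR lconst_BR] by metis
  moreover have "act (lconst x) v = 0" using v x unfolding wsp_def by auto
  ultimately show ?thesis by simp
qed

lemma scalar_bij:
  assumes a: "ring_aut s" and m: "is_maximal X" and r: "r \<notin> X"
  shows "bij_betw (act (lconst r)) (wsp act X) (wsp act X)"
proof -
  obtain x c where xc: "x \<in> X" "1 = x + c * r" using max_unit[OF m r] by blast
  show ?thesis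
  proof (rule bij_betw_byWitness[where f'="act (lconst c)"])
    show "\<forall>v\<in>wsp act X. act (lconst c) (act (lconst r) v) = v"
      using scalar_inv[OF xc] lconst_mult by simp
    show "\<forall>v\<in>wsp act X. act (lconst r) (act (lconst c) v) = v"
      using scalar_inv[OF xc(1), of "r * c"] xc(2) lconst_mult by (simp add: mult.commute)
    show "act (lconst r) ` wsp act X \<subseteq> wsp act X" using scalar_wsp[OF a] by auto
    show "act (lconst c) ` wsp act X \<subseteq> wsp act X" using scalar_wsp[OF a] by auto
  qed
qed

end

lemma bij_from_comps:
  assumes f: "f ` A \<subseteq> B" and g: "g ` B \<subseteq> A"
    and gf: "bij_betw (\<lambda>x. g (f x)) A A" and fg: "bij_betw (\<lambda>x. f (g x)) B B"
  shows "bij_betw f A B"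
  unfolding bij_betw_def
proof
  show "inj_on f A"
  proof (rule inj_onI)
    fix x y assume "x \<in> A" "y \<in> A" "f x = f y"
    thus "x = y" using gf unfolding bij_betw_def inj_on_def by metis
  qed
  show "f ` A = B"
  proof
    show "f ` A \<subseteq> B" by fact
    show "B \<subseteq> f ` A"
    proof
      fix b assume "b \<in> B"
      then obtain b' where "b' \<in> B" "b = f (g b')" using fg unfolding bij_betw_def by auto
      thus "b \<in> f ` A" using g by auto
    qed
  qed
qed


definition dec :: "((int \<Rightarrow> 'r::comm_ring_1) \<Rightarrow> 'm::ab_group_add \<Rightarrow> 'm) \<Rightarrow> 'm \<Rightarrow> 'r set set \<Rightarrow> ('r set \<Rightarrow> 'm) \<Rightarrow> bool" where
  "dec act v S u \<longleftrightarrow> finite S \<and> S \<subseteq> Maxspec \<and> (\<forall>Y\<in>S. u Y \<in> wsp act Y) \<and> v = (\<Sum>Y\<in>S. u Y)"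

definition pr :: "((int \<Rightarrow> 'r::comm_ring_1) \<Rightarrow> 'm::ab_group_add \<Rightarrow> 'm) \<Rightarrow> 'r set \<Rightarrow> 'm \<Rightarrow> 'm" where
  "pr act X v = (SOME x. \<exists>S u. dec act v S u \<and> x = (if X \<in> S then u X else 0))"

context
  fixes s :: "'r::comm_ring_1 \<Rightarrow> 'r" and H J :: "'r set" and act :: "(int \<Rightarrow> 'r) \<Rightarrow> 'm::ab_group_add \<Rightarrow> 'm"
  assumes M: "is_B_module s H J act" and W: "is_weight_module act"
begin

lemma dec_ex: "\<exists>S u. dec act v S u"
proof -
  have "\<forall>v. \<exists>S u. finite S \<and> S \<subseteq> Maxspec \<and> (\<forall>m\<in>S. u m \<in> wsp act m) \<and> v = (\<Sum>m\<in>S. u m)"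
    using W unfolding is_weight_module_def by (rule conjunct1)
  hence "\<exists>S u. finite S \<and> S \<subseteq> Maxspec \<and> (\<forall>m\<in>S. u m \<in> wsp act m) \<and> v = (\<Sum>m\<in>S. u m)"
    by (rule spec)
  thus ?thesis unfolding dec_def .
qed

lemma dec_uniq:
  assumes d: "dec act v S u" and d': "dec act v S' u'"
  shows "(if X \<in> S then u X else 0) = (if X \<in> S' then u' X else 0)"
proof -
  define T where "T = S \<union> S'"
  define e where "e Y = (if Y \<in> S then u Y else 0) - (if Y \<in> S' then u' Y else 0)" for Y
  have fT: "finite T" "T \<subseteq> Maxspec" using d d' unfolding T_def dec_def by auto
  have eW: "\<forall>Y\<in>T. e Y \<in> wsp act Y" unfolding e_def
    using d d' wsp_diff[OF M] wsp_0[OF M] unfolding dec_def by auto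
  have s1: "(\<Sum>Y\<in>T. if Y \<in> S then u Y else 0) = v"
    using sum.inter_restrict[OF fT(1), of u S] d unfolding dec_def T_def by (simp add: Int_absorb1)
  have s2: "(\<Sum>Y\<in>T. if Y \<in> S' then u' Y else 0) = v"
    using sum.inter_restrict[OF fT(1), of u' S'] d' unfolding dec_def T_def by (simp add: Int_absorb1 Int_commute)
  have "(\<Sum>Y\<in>T. e Y) = 0" unfolding e_def sum_subtractf s1 s2 by simp
  hence "\<forall>Y\<in>T. e Y = 0" using W fT eW unfolding is_weight_module_def by blast
  thus ?thesis unfolding e_def T_def by (cases "X \<in> S \<union> S'") auto
qed

lemma pr_eq: "dec act v S u \<Longrightarrow> pr act X v = (if X \<in> S then u X else 0)"
proof -
  assume d: "dec act v S u"
  have ex: "\<exists>x. \<exists>S u. dec act v S u \<and> x = (if X \<in> S then u X else 0)" using d by blast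
  have "\<exists>S' u'. dec act v S' u' \<and> pr act X v = (if X \<in> S' then u' X else 0)"
    using someI_ex[OF ex] unfolding pr_def .
  then obtain S' u' where "dec act v S' u'" "pr act X v = (if X \<in> S' then u' X else 0)" by blast
  thus ?thesis using dec_uniq[OF d] by simp
qed

lemma pr_add: "pr act X (v + w) = pr act X v + pr act X w"
proof -
  obtain S u where d: "dec act v S u" using dec_ex by blast
  obtain S' u' where d': "dec act w S' u'" using dec_ex by blast
  define T where "T = S \<union> S'"
  define e where "e Y = (if Y \<in> S then u Y else 0) + (if Y \<in> S' then u' Y else 0)" for Y
  have fT: "finite T" "T \<subseteq> Maxspec" using d d' unfolding T_def dec_def by auto
  have s1: "(\<Sum>Y\<in>T. if Y \<in> S then u Y else 0) = v"
    using sum.inter_restrict[OF fT(1), of u S] d unfolding dec_def T_def by (simp add: Int_absorb1)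
  have s2: "(\<Sum>Y\<in>T. if Y \<in> S' then u' Y else 0) = w"
    using sum.inter_restrict[OF fT(1), of u' S'] d' unfolding dec_def T_def by (simp add: Int_absorb1 Int_commute)
  have "dec act (v + w) T e" unfolding dec_def
  proof (intro conjI)
    show "\<forall>Y\<in>T. e Y \<in> wsp act Y" unfolding e_def
      using d d' wsp_add[OF M] wsp_0[OF M] unfolding dec_def by auto
    show "v + w = sum e T" unfolding e_def sum.distrib s1 s2 ..
  qed (use fT in auto)
  hence "pr act X (v + w) = (if X \<in> T then e X else 0)" by (rule pr_eq)
  thus ?thesis using pr_eq[OF d] pr_eq[OF d'] unfolding e_def T_def by auto
qed

lemma pr_0: "pr act X 0 = 0"
  using pr_add[of X 0 0] by simp

lemma pr_neg: "pr act X (- v) = - pr act X v"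
  using pr_add[of X v "-v"] pr_0 by (metis add.right_inverse minus_unique)

lemma pr_sum: "pr act X (\<Sum>i\<in>F. f i) = (\<Sum>i\<in>F. pr act X (f i))"
  by (induction F rule: infinite_finite_induct) (auto simp: pr_0 pr_add)

lemma pr_wsp:
  assumes Y: "Y \<in> Maxspec" and v: "v \<in> wsp act Y"
  shows "pr act X v = (if X = Y then v else 0)"
proof -
  have "dec act v {Y} (\<lambda>_. v)" using Y v unfolding dec_def by auto
  from pr_eq[OF this] show ?thesis by auto
qed

lemma nonzero_wsp:
  fixes v :: 'm
  assumes "v \<noteq> 0"
  shows "\<exists>Y\<in>Maxspec. wsp act Y \<noteq> {0}"
proof -
  obtain S u where d: "dec act v S u" using dec_ex by blast
  have "\<exists>Y\<in>S. u Y \<noteq> 0"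
  proof (rule ccontr)
    assume "\<not> ?thesis"
    hence "v = 0" using d unfolding dec_def by simp
    thus False using assms by simp
  qed
  thus ?thesis using d unfolding dec_def by blast
qed

end


context
  fixes \<sigma> :: "'r::comm_ring_1 \<Rightarrow> 'r" and H J :: "'r set" and n :: nat and Orb :: "'r set set"
    and act :: "(int \<Rightarrow> 'r) \<Rightarrow> 'm::ab_group_add \<Rightarrow> 'm"
  assumes a: "ring_aut \<sigma>"
    and p: "\<sigma> ^^ n = id"
    and orb: "is_sigma_orbit \<sigma> Orb" and fin: "finite Orb" and card: "card Orb = n"
    and nb: "\<forall>m\<in>Orb. \<not> is_break \<sigma> H J m"
begin

lemma b: "bij \<sigma>" using a unfolding ring_aut_def by auto

lemma img_spow: "spow \<sigma> j ` spow \<sigma> k ` X = spow \<sigma> (j + k) ` X"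
  by (simp add: image_comp spow_add[OF b])

lemma orb_max: "X \<in> Orb \<Longrightarrow> is_maximal X \<and> X \<in> Maxspec"
  using orb max_image[OF spow_aut[OF a]] unfolding is_sigma_orbit_def Maxspec_def by auto

lemma orb_shift: "X \<in> Orb \<Longrightarrow> spow \<sigma> j ` X \<in> Orb"
proof -
  assume X: "X \<in> Orb"
  obtain m0 where m0: "Orb = {spow \<sigma> k ` m0 | k. True}" using orb unfolding is_sigma_orbit_def by auto
  obtain k where k: "X = spow \<sigma> k ` m0" using X m0 by auto
  have "spow \<sigma> j ` X = spow \<sigma> (j + k) ` m0" using k img_spow by simp
  thus ?thesis using m0 by blast
qed

lemma orb_rep: "X \<in> Orb \<Longrightarrow> Y \<in> Orb \<Longrightarrow> \<exists>j. Y = spow \<sigma> j ` X"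
proof -
  assume X: "X \<in> Orb" and Y: "Y \<in> Orb"
  obtain m0 where m0: "Orb = {spow \<sigma> k ` m0 | k. True}" using orb unfolding is_sigma_orbit_def by auto
  obtain k where k: "X = spow \<sigma> k ` m0" using X m0 by auto
  obtain k' where k': "Y = spow \<sigma> k' ` m0" using Y m0 by auto
  have "spow \<sigma> (k' - k) ` X = Y" using k k' img_spow by simp
  thus ?thesis by metis
qed

lemma n_pos: "n > 0"
proof -
  obtain m0 where m0: "Orb = {spow \<sigma> k ` m0 | k. True}" using orb unfolding is_sigma_orbit_def by auto
  hence "spow \<sigma> 0 ` m0 \<in> Orb" by blast
  hence "Orb \<noteq> {}" by blast
  hence "card Orb > 0" using fin by (simp add: card_gt_0_iff)
  thus ?thesis using card by simp
qed

lemma orb_period: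
  assumes X: "X \<in> Orb" and e: "spow \<sigma> j ` X = X"
  shows "int n dvd j"
proof -
  define f where "f k = spow \<sigma> k ` X" for k
  have "Orb \<subseteq> f ` {0..<int n}"
  proof
    fix Y assume "Y \<in> Orb"
    then obtain k where "Y = spow \<sigma> k ` X" using orb_rep[OF X] by blast
    hence "Y = f (k mod int n)" unfolding f_def using spow_mod[OF b p] by metis
    moreover have "k mod int n \<in> {0..<int n}" using n_pos by simp
    ultimately show "Y \<in> f ` {0..<int n}" by blast
  qed
  moreover have "f ` {0..<int n} \<subseteq> Orb" unfolding f_def using orb_shift[OF X] by auto
  ultimately have "f ` {0..<int n} = Orb" by blast
  hence "card (f ` {0..<int n}) = card {0..<int n}" using card by simp
  hence inj: "inj_on f {0..<int n}" by (rule eq_card_imp_inj_on[rotated]) simp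
  have "f (j mod int n) = f 0" unfolding f_def using e spow_mod[OF b p, of j] by simp
  hence "j mod int n = 0" using inj n_pos unfolding inj_on_def by simp
  thus ?thesis by (simp add: dvd_eq_mod_eq_0)
qed

lemma orb_nb: "X \<in> Orb \<Longrightarrow> \<not> iprod H J \<subseteq> X"
proof
  assume X: "X \<in> Orb" and sub: "iprod H J \<subseteq> X"
  define Y where "Y = spow \<sigma> (-1) ` X"
  have Y: "Y \<in> Orb" unfolding Y_def using orb_shift[OF X] .
  have "\<sigma> ` Y = X" unfolding Y_def using img_spow[of 1 "-1" X] by (simp add: spow_one)
  moreover have "is_prime_ideal X" using orb_max[OF X] max_prime by blast
  ultimately have "is_break \<sigma> H J Y" using sub orb_max[OF Y] unfolding is_break_def SB_def by auto
  thus False using nb Y by auto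
qed

lemma orb_HJ: "X \<in> Orb \<Longrightarrow> \<not> H \<subseteq> X \<and> \<not> J \<subseteq> X"
proof -
  assume X: "X \<in> Orb"
  have i: "is_ideal X" using orb_max[OF X] unfolding is_maximal_def by auto
  have "H \<subseteq> X \<Longrightarrow> iprod H J \<subseteq> X" by (rule iprod_least[OF i]) (auto simp: ideal_rmult[OF i])
  moreover have "J \<subseteq> X \<Longrightarrow> iprod H J \<subseteq> X" by (rule iprod_least[OF i]) (auto simp: ideal_lmult[OF i])
  ultimately show ?thesis using orb_nb[OF X] by blast
qed

lemma orb_shift_not: "X \<in> Orb \<Longrightarrow> (\<And>Y. Y \<in> Orb \<Longrightarrow> \<not> Z \<subseteq> Y) \<Longrightarrow> \<not> spow \<sigma> j ` Z \<subseteq> X"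
proof
  assume X: "X \<in> Orb" and h: "\<And>Y. Y \<in> Orb \<Longrightarrow> \<not> Z \<subseteq> Y" and sub: "spow \<sigma> j ` Z \<subseteq> X"
  have "Z \<subseteq> spow \<sigma> (-j) ` X"
  proof
    fix z assume "z \<in> Z"
    hence "spow \<sigma> j z \<in> X" using sub by auto
    thus "z \<in> spow \<sigma> (-j) ` X" using spow_cancel[OF b, of j z] by (metis image_eqI)
  qed
  thus False using h[OF orb_shift[OF X]] by blast
qed

lemma Iseq_out: "X \<in> Orb \<Longrightarrow> \<exists>x\<in>Iseq \<sigma> H J k. x \<notin> X"
proof -
  assume X: "X \<in> Orb"
  have P: "is_prime_ideal X" using orb_max[OF X] max_prime by blast
  show ?thesis
    by (rule Iseq_notin[OF P]) (use orb_shift_not[OF X] orb_HJ in blast)+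
qed

end


context
  fixes \<sigma> :: "'r::comm_ring_1 \<Rightarrow> 'r" and H J :: "'r set" and n :: nat and Orb :: "'r set set"
    and act :: "(int \<Rightarrow> 'r) \<Rightarrow> 'm::ab_group_add \<Rightarrow> 'm"
  assumes a: "ring_aut \<sigma>"
    and p: "\<sigma> ^^ n = id"
    and orb: "is_sigma_orbit \<sigma> Orb" and fin: "finite Orb" and card: "card Orb = n"
    and nb: "\<forall>m\<in>Orb. \<not> is_break \<sigma> H J m"
    and M: "is_B_module \<sigma> H J act"
begin

lemma bb: "bij \<sigma>" using a unfolding ring_aut_def by auto

lemma twist:
  assumes X: "X \<in> Orb"
  shows "\<exists>\<phi>. twisted_iso \<sigma> H J n act X i \<phi>"
proof -
  define Xi where "Xi = spow \<sigma> i ` X"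
  have Xi: "Xi \<in> Orb" unfolding Xi_def by (rule orb_shift[OF a p orb fin card nb X])
  have mX: "is_maximal X" and mXi: "is_maximal Xi" using orb_max[OF a p orb fin card nb] X Xi by auto
  have pX: "is_prime_ideal X" and pXi: "is_prime_ideal Xi" using mX mXi max_prime by auto
  obtain x where x: "x \<in> Iseq \<sigma> H J (-i)" "x \<notin> X" using Iseq_out[OF a p orb fin card nb X] by blast
  obtain y where y: "y \<in> Iseq \<sigma> H J i" "y \<notin> Xi" using Iseq_out[OF a p orb fin card nb Xi] by blast
  define \<phi> where "\<phi> = act (mon x (-i))"
  define \<psi> where "\<psi> = act (mon y i)"
  have bk: "spow \<sigma> (-i) ` Xi = X" unfolding Xi_def using img_spow[OF a p orb fin card nb] by simp
  have f1: "\<phi> ` wsp act Xi \<subseteq> wsp act X" unfolding \<phi>_def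
    using act_mon_wsp[OF M a x(1)] bk by auto
  have f2: "\<psi> ` wsp act X \<subseteq> wsp act Xi" unfolding \<psi>_def Xi_def
    using act_mon_wsp[OF M a y(1)] by auto
  have r1: "y * spow \<sigma> i x \<notin> Xi"
  proof
    assume "y * spow \<sigma> i x \<in> Xi"
    hence "spow \<sigma> i x \<in> Xi" using pXi y(2) unfolding is_prime_ideal_def by auto
    then obtain z where "z \<in> X" "spow \<sigma> i z = spow \<sigma> i x" unfolding Xi_def by auto
    hence "z = x" using ring_aut_inj[OF spow_aut[OF a]] by (meson injD)
    thus False using x(2) \<open>z \<in> X\<close> by simp
  qed
  have r2: "x * spow \<sigma> (-i) y \<notin> X"
  proof
    assume "x * spow \<sigma> (-i) y \<in> X"
    hence "spow \<sigma> (-i) y \<in> X" using pX x(2) unfolding is_prime_ideal_def by auto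
    hence "spow \<sigma> i (spow \<sigma> (-i) y) \<in> Xi" unfolding Xi_def by auto
    thus False using y(2) spow_cancel2[OF bb] by simp
  qed
  have c1: "\<And>v. \<psi> (\<phi> v) = act (lconst (y * spow \<sigma> i x)) v"
    unfolding \<phi>_def \<psi>_def lconst_mon using act_mon_comp[OF M a y(1) x(1)] by simp
  have c2: "\<And>v. \<phi> (\<psi> v) = act (lconst (x * spow \<sigma> (-i) y)) v"
    unfolding \<phi>_def \<psi>_def lconst_mon using act_mon_comp[OF M a x(1) y(1)] by simp
  have bij: "bij_betw \<phi> (wsp act Xi) (wsp act X)"
  proof (rule bij_from_comps[OF f1 f2])
    show "bij_betw (\<lambda>v. \<psi> (\<phi> v)) (wsp act Xi) (wsp act Xi)"
      unfolding c1 by (rule scalar_bij[OF M a mXi r1])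
    show "bij_betw (\<lambda>v. \<phi> (\<psi> v)) (wsp act X) (wsp act X)"
      unfolding c2 by (rule scalar_bij[OF M a mX r2])
  qed
  have add: "\<forall>v\<in>wsp act Xi. \<forall>w\<in>wsp act Xi. \<phi> (v + w) = \<phi> v + \<phi> w"
    unfolding \<phi>_def using act_add[OF M mon_BR[OF x(1)]] by auto
  have eqv: "\<forall>f\<in>Lam \<sigma> H J n. \<forall>v\<in>wsp act Xi. \<phi> (act f v) = act (lmap (spow \<sigma> (- i)) f) (\<phi> v)"
  proof (intro ballI)
    fix f v assume f: "f \<in> Lam \<sigma> H J n" and v: "v \<in> wsp act Xi"
    define Sf where "Sf = {k. f k \<noteq> 0}"
    have fB: "f \<in> BR \<sigma> H J" and fd: "\<And>k. f k \<noteq> 0 \<Longrightarrow> int n dvd k" using f unfolding Lam_def by auto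
    have fS: "finite Sf" using fB unfolding BR_def Sf_def by auto
    have fk: "\<And>k. f k \<in> Iseq \<sigma> H J k" using fB unfolding BR_def by auto
    define g where "g = lmap (spow \<sigma> (- i)) f"
    have g0: "\<And>k. g k = spow \<sigma> (-i) (f k)" unfolding g_def lmap_def by simp
    have gsub: "{k. g k \<noteq> 0} \<subseteq> Sf" unfolding Sf_def g0 using ring_aut_zero[OF spow_aut[OF a]] by auto
    have gk: "\<And>k. g k \<in> Iseq \<sigma> H J k"
    proof -
      fix k show "g k \<in> Iseq \<sigma> H J k"
      proof (cases "f k = 0")
        case True then show ?thesis unfolding g0 using ring_aut_zero[OF spow_aut[OF a]] ideal_0[OF Iseq_ideal] by simp
      next
        case False then show ?thesis unfolding g0 using Iseq_inv[OF a p fd[OF False] fk] by simp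
      qed
    qed
    have gB: "g \<in> BR \<sigma> H J" unfolding BR_def using gk gsub fS finite_subset by blast
    have "\<phi> (act f v) = \<phi> (\<Sum>k\<in>Sf. act (mon (f k) k) v)"
      using act_decomp[OF M fS fB] Sf_def by simp
    also have "\<dots> = (\<Sum>k\<in>Sf. \<phi> (act (mon (f k) k) v))"
      unfolding \<phi>_def by (rule act_sum[OF M mon_BR[OF x(1)]])
    also have "\<dots> = (\<Sum>k\<in>Sf. act (mon (x * spow \<sigma> (-i) (f k)) (-i + k)) v)"
      unfolding \<phi>_def using act_mon_comp[OF M a x(1) fk] by simp
    also have "\<dots> = (\<Sum>k\<in>Sf. act (mon (g k) k) (\<phi> v))"
    proof (rule sum.cong)
      fix k assume k: "k \<in> Sf"
      have "spow \<sigma> k x = x" using spow_dvd[OF bb p fd] k unfolding Sf_def by simp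
      hence "act (mon (g k) k) (\<phi> v) = act (mon (g k * x) (k + -i)) v"
        unfolding \<phi>_def using act_mon_comp[OF M a gk x(1)] by simp
      thus "act (mon (x * spow \<sigma> (-i) (f k)) (-i + k)) v = act (mon (g k) k) (\<phi> v)"
        unfolding g0 by (simp add: mult.commute add.commute)
    qed simp
    also have "\<dots> = act g (\<phi> v)"
      using act_decomp[OF M fS gB gsub] by simp
    finally show "\<phi> (act f v) = act (lmap (spow \<sigma> (- i)) f) (\<phi> v)" unfolding g_def .
  qed
  have "twisted_iso \<sigma> H J n act X i \<phi>" unfolding twisted_iso_def
    using bij add eqv unfolding Xi_def by blast
  thus ?thesis by blast
qed

end


context
  fixes \<sigma> :: "'r::comm_ring_1 \<Rightarrow> 'r" and H J :: "'r set" and n :: nat and Orb :: "'r set set"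
    and act :: "(int \<Rightarrow> 'r) \<Rightarrow> 'm::ab_group_add \<Rightarrow> 'm"
  assumes a: "ring_aut \<sigma>"
    and p: "\<sigma> ^^ n = id"
    and orb: "is_sigma_orbit \<sigma> Orb" and fin: "finite Orb" and card: "card Orb = n"
    and nb: "\<forall>m\<in>Orb. \<not> is_break \<sigma> H J m"
    and S: "simple_B_module \<sigma> H J act"
    and W: "is_weight_module act"
    and sp: "supp act \<subseteq> Orb"
begin

lemma MM: "is_B_module \<sigma> H J act" using S unfolding simple_B_module_def by auto

lemma b2: "bij \<sigma>" using a unfolding ring_aut_def by auto

lemma Lam_wsp:
  assumes X: "X \<in> Orb" and f: "f \<in> Lam \<sigma> H J n" and v: "v \<in> wsp act X"
  shows "act f v \<in> wsp act X"
proof -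
  define Sf where "Sf = {k. f k \<noteq> 0}"
  have fB: "f \<in> BR \<sigma> H J" and fd: "\<And>k. f k \<noteq> 0 \<Longrightarrow> int n dvd k" using f unfolding Lam_def by auto
  have fS: "finite Sf" using fB unfolding BR_def Sf_def by auto
  have fk: "\<And>k. f k \<in> Iseq \<sigma> H J k" using fB unfolding BR_def by auto
  have "act f v = (\<Sum>k\<in>Sf. act (mon (f k) k) v)" using act_decomp[OF MM fS fB] Sf_def by simp
  moreover have "\<forall>k\<in>Sf. act (mon (f k) k) v \<in> wsp act X"
  proof
    fix k assume k: "k \<in> Sf"
    have "spow \<sigma> k = id" using spow_dvd[OF b2 p fd] k unfolding Sf_def by simp
    thus "act (mon (f k) k) v \<in> wsp act X" using act_mon_wsp[OF MM a fk v, of k] by simp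
  qed
  ultimately show ?thesis using wsp_sum[OF MM] by simp
qed

lemma LamQ:
  assumes X: "X \<in> Orb"
  shows "is_LamQ_module \<sigma> H J n act X"
  unfolding is_LamQ_module_def
proof (intro conjI ballI)
  fix f v assume "f \<in> Lam \<sigma> H J n" "v \<in> wsp act X"
  thus "act f v \<in> wsp act X" using Lam_wsp[OF X] by blast
next
  fix f v assume f: "f \<in> mLam \<sigma> H J n X" and v: "v \<in> wsp act X"
  have "\<exists>(F::nat set) c g. finite F \<and> (\<forall>i\<in>F. c i \<in> X \<and> g i \<in> Lam \<sigma> H J n) \<and>
        f = (\<lambda>k. \<Sum>i\<in>F. lmult \<sigma> (lconst (c i)) (g i) k)" using f unfolding mLam_def by simp
  then obtain F :: "nat set" and c g where F: "finite F" "\<forall>i\<in>F. c i \<in> X \<and> g i \<in> Lam \<sigma> H J n"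
    and fe: "f = (\<lambda>k. \<Sum>i\<in>F. lmult \<sigma> (lconst (c i)) (g i) k)" by blast
  have gB: "\<And>i. i \<in> F \<Longrightarrow> g i \<in> BR \<sigma> H J" using F unfolding Lam_def by auto
  have tB: "\<forall>i\<in>F. lmult \<sigma> (lconst (c i)) (g i) \<in> BR \<sigma> H J"
  proof
    fix i assume i: "i \<in> F"
    have "{k. c i * g i k \<noteq> 0} \<subseteq> {k. g i k \<noteq> 0}" by auto
    hence "finite {k. c i * g i k \<noteq> 0}" using gB[OF i] unfolding BR_def using finite_subset by blast
    moreover have "\<forall>k. c i * g i k \<in> Iseq \<sigma> H J k"
    proof
      fix k have "g i k \<in> Iseq \<sigma> H J k" using gB[OF i] unfolding BR_def by auto
      thus "c i * g i k \<in> Iseq \<sigma> H J k" by (rule ideal_lmult[OF Iseq_ideal])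
    qed
    ultimately show "lmult \<sigma> (lconst (c i)) (g i) \<in> BR \<sigma> H J" unfolding lmult_lconst BR_def by auto
  qed
  have "act f v = (\<Sum>i\<in>F. act (lmult \<sigma> (lconst (c i)) (g i)) v)"
    unfolding fe using act_funsum[OF MM F(1) tB] by blast
  also have "\<dots> = (\<Sum>i\<in>F. 0)"
  proof (rule sum.cong)
    fix i assume i: "i \<in> F"
    have "act (g i) v \<in> wsp act X" using Lam_wsp[OF X _ v] F i by blast
    hence "act (lconst (c i)) (act (g i) v) = 0" using F i unfolding wsp_def by auto
    thus "act (lmult \<sigma> (lconst (c i)) (g i)) v = 0" using act_comp[OF MM lconst_BR gB[OF i]] by simp
  qed simp
  finally show "act f v = 0" by simp
qed

lemma wsp_nonzero:
  assumes X: "X \<in> Orb"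
  shows "wsp act X \<noteq> {0}"
proof -
  obtain v :: 'm where "v \<noteq> 0" using S unfolding simple_B_module_def by auto
  then obtain Y where Y: "Y \<in> Maxspec" "wsp act Y \<noteq> {0}" using nonzero_wsp[OF MM W] by blast
  hence "Y \<in> Orb" using sp unfolding supp_def by auto
  then obtain j where j: "Y = spow \<sigma> j ` X" using orb_rep[OF a p orb fin card nb X] by blast
  obtain \<phi> where t: "twisted_iso \<sigma> H J n act X j \<phi>" using twist[OF a p orb fin card nb MM X] by blast
  have bij: "bij_betw \<phi> (wsp act Y) (wsp act X)" and ad: "\<forall>v\<in>wsp act Y. \<forall>w\<in>wsp act Y. \<phi> (v + w) = \<phi> v + \<phi> w"
    using t j unfolding twisted_iso_def by auto
  obtain y where y: "y \<in> wsp act Y" "y \<noteq> 0" using Y(2) wsp_0[OF MM, of Y] by blast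
  have z: "0 \<in> wsp act Y" by (rule wsp_0[OF MM])
  have "\<phi> 0 = 0" using ad z by (metis add.right_neutral add_left_cancel)
  moreover have "\<phi> y \<noteq> \<phi> 0" using bij y z unfolding bij_betw_def inj_on_def by metis
  moreover have "\<phi> y \<in> wsp act X" using bij y unfolding bij_betw_def by auto
  ultimately show ?thesis by auto
qed

lemma N_sum: "(\<And>x y. x \<in> N \<Longrightarrow> y \<in> N \<Longrightarrow> x + y \<in> N) \<Longrightarrow> 0 \<in> N \<Longrightarrow> (\<forall>i\<in>F. u i \<in> N) \<Longrightarrow> (\<Sum>i\<in>F. u i) \<in> N"
  by (induction F rule: infinite_finite_induct) auto

lemma simple_part:
  assumes X: "X \<in> Orb" and N: "is_Lam_submodule \<sigma> H J n act X N"
  shows "N = {0} \<or> N = wsp act X"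
proof (cases "N = {0}")
  case True thus ?thesis by simp
next
  case False
  note nz = False
  have NW: "N \<subseteq> wsp act X" and N0: "0 \<in> N" and Nadd: "\<And>x y. x \<in> N \<Longrightarrow> y \<in> N \<Longrightarrow> x + y \<in> N"
    and Nneg: "\<And>x. x \<in> N \<Longrightarrow> - x \<in> N" and NL: "\<And>f x. f \<in> Lam \<sigma> H J n \<Longrightarrow> x \<in> N \<Longrightarrow> act f x \<in> N"
    using N unfolding is_Lam_submodule_def by auto
  have XM: "X \<in> Maxspec" using orb_max[OF a p orb fin card nb X] by auto
  define P where "P = {w. \<forall>c k. c \<in> Iseq \<sigma> H J k \<longrightarrow> pr act X (act (mon c k) w) \<in> N}"
  have NP: "N \<subseteq> P"
  proof
    fix w assume w: "w \<in> N"
    show "w \<in> P" unfolding P_def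
    proof (intro CollectI allI impI)
      fix c k assume c: "c \<in> Iseq \<sigma> H J k"
      have u: "act (mon c k) w \<in> wsp act (spow \<sigma> k ` X)" using act_mon_wsp[OF MM a c] NW w by auto
      have XkM: "spow \<sigma> k ` X \<in> Maxspec" using orb_max[OF a p orb fin card nb orb_shift[OF a p orb fin card nb X]] by auto
      show "pr act X (act (mon c k) w) \<in> N"
      proof (cases "X = spow \<sigma> k ` X")
        case True
        hence "int n dvd k" using orb_period[OF a p orb fin card nb X] by simp
        hence "mon c k \<in> Lam \<sigma> H J n" unfolding Lam_def using mon_BR[OF c] by (auto simp: mon_def)
        hence "act (mon c k) w \<in> N" using NL w by blast
        thus ?thesis using pr_wsp[OF MM W XkM u] True by simp
      next
        case False
        thus ?thesis using pr_wsp[OF MM W XkM u] N0 by simp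
      qed
    qed
  qed
  have sub: "is_B_submodule \<sigma> H J act P" unfolding is_B_submodule_def
  proof (intro conjI ballI)
    show "0 \<in> P" unfolding P_def using act_0[OF MM mon_BR] pr_0[OF MM W] N0 by auto
  next
    fix v w assume "v \<in> P" "w \<in> P"
    thus "v + w \<in> P" unfolding P_def using act_add[OF MM mon_BR] pr_add[OF MM W] Nadd by simp
  next
    fix v assume "v \<in> P"
    thus "- v \<in> P" unfolding P_def using act_neg[OF MM mon_BR] pr_neg[OF MM W] Nneg by simp
  next
    fix g w assume g: "g \<in> BR \<sigma> H J" and w: "w \<in> P"
    define Sg where "Sg = {k. g k \<noteq> 0}"
    have gS: "finite Sg" using g unfolding BR_def Sg_def by auto
    have gk: "\<And>k. g k \<in> Iseq \<sigma> H J k" using g unfolding BR_def by auto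
    show "act g w \<in> P" unfolding P_def
    proof (intro CollectI allI impI)
      fix c k assume c: "c \<in> Iseq \<sigma> H J k"
      have "act (mon c k) (act g w) = act (mon c k) (\<Sum>l\<in>Sg. act (mon (g l) l) w)"
        using act_decomp[OF MM gS g] Sg_def by simp
      also have "\<dots> = (\<Sum>l\<in>Sg. act (mon c k) (act (mon (g l) l) w))"
        by (rule act_sum[OF MM mon_BR[OF c]])
      also have "\<dots> = (\<Sum>l\<in>Sg. act (mon (c * spow \<sigma> k (g l)) (k + l)) w)"
        using act_mon_comp[OF MM a c gk] by simp
      finally have e: "pr act X (act (mon c k) (act g w)) = (\<Sum>l\<in>Sg. pr act X (act (mon (c * spow \<sigma> k (g l)) (k + l)) w))"
        using pr_sum[OF MM W] by simp
      have wP: "\<And>c' k'. c' \<in> Iseq \<sigma> H J k' \<Longrightarrow> pr act X (act (mon c' k') w) \<in> N"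
        using w unfolding P_def by blast
      have "\<forall>l\<in>Sg. pr act X (act (mon (c * spow \<sigma> k (g l)) (k + l)) w) \<in> N"
      proof
        fix l show "pr act X (act (mon (c * spow \<sigma> k (g l)) (k + l)) w) \<in> N"
          by (rule wP[OF Iseq_mult[OF a c gk]])
      qed
      thus "pr act X (act (mon c k) (act g w)) \<in> N" unfolding e
        using N_sum[OF Nadd N0, where F=Sg and u="\<lambda>l. pr act X (act (mon (c * spow \<sigma> k (g l)) (k + l)) w)"] by simp
    qed
  qed
  have "P \<noteq> {0}" using NP nz N0 by blast
  hence PU: "P = UNIV" using S sub unfolding simple_B_module_def by blast
  have "wsp act X \<subseteq> N"
  proof
    fix v assume v: "v \<in> wsp act X"
    have "v \<in> P" using PU by simp
    hence "pr act X (act (mon 1 0) v) \<in> N" unfolding P_def using Iseq_0 by blast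
    moreover have "act (mon 1 0) v = v" using act_one[OF MM] by (simp add: lconst_mon)
    ultimately show "v \<in> N" using pr_wsp[OF MM W XM v] by simp
  qed
  thus ?thesis using NW by blast
qed

lemma main: "\<forall>m\<in>Orb. simple_LamQ \<sigma> H J n act m \<and> (\<forall>i::int. \<exists>\<phi>. twisted_iso \<sigma> H J n act m i \<phi>)"
proof (intro ballI conjI allI)
  fix m assume m: "m \<in> Orb"
  show "simple_LamQ \<sigma> H J n act m" unfolding simple_LamQ_def
  proof (intro conjI allI impI)
    show "is_LamQ_module \<sigma> H J n act m" by (rule LamQ[OF m])
    show "wsp act m \<noteq> {0}" by (rule wsp_nonzero[OF m])
    fix N assume "is_Lam_submodule \<sigma> H J n act m N"
    thus "N = {0} \<or> N = wsp act m" by (rule simple_part[OF m])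
  qed
  fix i :: int
  show "\<exists>\<phi>. twisted_iso \<sigma> H J n act m i \<phi>" by (rule twist[OF a p orb fin card nb MM m])
qed

end

theorem lemma3p13:
  fixes \<sigma> :: "'r::idom \<Rightarrow> 'r" and H J :: "'r set" and n :: nat and Orb :: "'r set set"
    and act :: "(int \<Rightarrow> 'r) \<Rightarrow> 'm::ab_group_add \<Rightarrow> 'm"
  assumes "ring_aut \<sigma>" and "is_ideal H" and "is_ideal J"
    and "\<forall>k. Iseq \<sigma> H J k \<noteq> {0}"
    and "\<sigma> ^^ n = id"
    and "is_sigma_orbit \<sigma> Orb" and "finite Orb" and "card Orb = n"
    and "\<forall>m\<in>Orb. \<not> is_break \<sigma> H J m"
    and "simple_B_module \<sigma> H J act"
    and "is_weight_module act"
    and "supp act \<subseteq> Orb"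
  shows "\<forall>m\<in>Orb. simple_LamQ \<sigma> H J n act m \<and>
           (\<forall>i::int. \<exists>\<phi>. twisted_iso \<sigma> H J n act m i \<phi>)"
  by (rule main[OF assms(1,5,6,7,8,9,10,11,12)])

end
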